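(* Consider $n=\sum_{i=1}^L n_i$ component lifetimes $T_j^{(i)}$, $j=1,\dots,n_i$, $i=1,\dots,L$ ($L\ge1$), where components of type $i$ have common reliability function $\bar F_i$, the lifetimes within each type are exchangeable, and the joint reliability function is given by a survival copula $\hat C$: $$P(T_j^{(i)}>t_j^{(i)},\ j=1,\dots,n_i,\ i=1,\dots,L)=\hat C\big(\bar F_1(t_1^{(1)}),\dots,\bar F_1(t_{n_1}^{(1)}),\dots,\bar F_L(t_1^{(L)}),\dots,\bar F_L(t_{n_L}^{(L)})\big).$$ (a) For $\tau>0$ and integers $0\le j_k\le n_k$, let $$B(\tau,j_1,\dots,j_L)=P\big(T_1^{(k)}\le\tau,\dots,T_{j_k}^{(k)}\le\tau,\ T_{j_k+1}^{(k)}>\tau,\dots,T_{n_k}^{(k)}>\tau\ \text{for all } k=1,\dots,L\big).$$ Then $$B(\tau,j_1,\dots,j_L)=\sum_{b_1=0}^{j_1}\cdots\sum_{b_L=0}^{j_L}(-1)^{b_1+\cdots+ b_L}\binom{j_1}{b_1}\cdots \binom{j_L}{b_L} \hat{C}(\underbrace{\bar{F}_1(\tau)}_{n_1-j_1+b_1},\underbrace{1}_{j_1-b_1},\dots,\underbrace{\bar{F}_L(\tau)}_{n_L-j_L+b_L},\underbrace{1}_{j_L-b_L}).$$ (b) Fix $i\in\{1,\dots,L\}$, integers $0\le l_k\le m_k\le n_k$ for $k\neq i$ and $0\le l_i\le m_i\le n_i-1$, and $0<s<s+\delta$, $s<\tau$. Let $$A_{\mathbf{m}, \mathbf{l}}^{(i)}(s,s+\delta,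 \tau)=P\Big(T_1^{(k)}>\tau,\dots,T_{l_k}^{(k)}>\tau,\ s<T_{l_k+1}^{(k)}\le\tau,\dots,s<T_{m_k}^{(k)}\le\tau,\ T_{m_k+1}^{(k)}\le s,\dots,T_{n_k}^{(k)}\le s\ \text{for } k\neq i;\ T_1^{(i)}>\tau,\dots,T_{l_i}^{(i)}>\tau,\ s<T_{l_i+1}^{(i)}\le\tau,\dots,s<T_{m_i}^{(i)}\le\tau,\ s<T_{m_i+1}^{(i)}\le s+\delta,\ T_{m_i+2}^{(i)}\le s,\dots,T_{n_i}^{(i)}\le s\Big).$$ Then $$A_{\mathbf{m}, \mathbf{l}}^{(i)}(s,s+\delta, \tau)=\sum_{j_1=0}^{n_1-m_1}\cdots\sum_{j_i=0}^{n_i-m_i-1}\cdots\sum_{j_L=0}^{n_L-m_L}(-1)^{j_1+\cdots + j_L}\binom{n_1-m_1}{j_1}\cdots \binom{n_i-m_i-1}{j_i}\cdots\binom{n_L-m_L}{j_L}\sum_{d_1=0}^{m_1-l_1}\cdots\sum_{d_L=0}^{m_L-l_L}(-1)^{d_1+\cdots + d_L}\binom{m_1-l_1}{d_1}\cdots \binom{m_L-l_L}{d_L}$$ $$\times \Big[\hat{C}\big(\underbrace{\bar{F}_k(\tau)}_{l_k+d_k}, \underbrace{\bar{F}_k(s)}_{m_k-l_k+j_k-d_k},\underbrace{1}_{n_k-m_k-j_k}\ (k\neq i);\ \underbrace{\bar{F}_i(\tau)}_{l_i+d_i}, \underbrace{\bar{F}_i(s)}_{m_i-l_i+j_i-d_i+1},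 \underbrace{1}_{n_i-m_i-j_i-1}\big)-\hat{C}\big(\underbrace{\bar{F}_k(\tau)}_{l_k+d_k}, \underbrace{\bar{F}_k(s)}_{m_k-l_k+j_k-d_k},\underbrace{1}_{n_k-m_k-j_k}\ (k\neq i);\ \underbrace{\bar{F}_i(\tau)}_{l_i+d_i}, \underbrace{\bar{F}_i(s)}_{m_i-l_i+j_i-d_i}, \bar{F}_i(s+\delta), \underbrace{1}_{n_i-m_i-j_i-1} \big)\Big].$$
   Context: In the arguments of $\hat C$, $\underbrace{u}_{m}$ denotes $m$ consecutive repetitions of the value $u$; the arguments are arranged in blocks, the block for type $k$ consisting of the $n_k$ arguments associated with the components of type $k$ (in (b), the block for each type $k\ne i$ and the block for type $i$ are placed in their positions $k$ and $i$ among the $L$ blocks). By within-type exchangeability the order of arguments inside a block is immaterial. *)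

theory Defs
  imports "HOL-Probability.Probability" "HOL-Combinatorics.Permutations"
begin

text \<open>Index set of the components: type k < L (types are numbered 0..L-1),
  component j < n k within type k (numbered 0..n k - 1).\<close>
definition idx :: "nat \<Rightarrow> (nat \<Rightarrow> nat) \<Rightarrow> (nat \<times> nat) set" where
  "idx L n = Sigma {..<L} (\<lambda>k. {..<n k})"

definition is_copula :: "'i set \<Rightarrow> (('i \<Rightarrow> real) \<Rightarrow> real) \<Rightarrow> bool" where
  "is_copula I C \<longleftrightarrow>
     finite I \<and>
     (\<forall>u \<in> I \<rightarrow>\<^sub>E {0..1}. C u \<in> {0..1}) \<and>
     (\<forall>u \<in> I \<rightarrow>\<^sub>E {0..1}. (\<exists>i\<in>I. u i = 0) \<longrightarrow> C u = 0) \<and>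
     (\<forall>i\<in>I. \<forall>x\<in>{0..1}. C (restrict (\<lambda>j. if j = i then x else 1) I) = x) \<and>
     (\<forall>a \<in> I \<rightarrow>\<^sub>E {0..1}. \<forall>b \<in> I \<rightarrow>\<^sub>E {0..1}. (\<forall>i\<in>I. a i \<le> b i) \<longrightarrow>
        0 \<le> (\<Sum>S\<in>Pow I. (-1::real) ^ card S * C (restrict (\<lambda>i. if i \<in> S then a i else b i) I)))"

end

theory Submission
  imports Defs
begin

lemma cop_finite: "is_copula I C \<Longrightarrow> finite I" by (simp add: is_copula_def)
lemma cop_ground: "is_copula I C \<Longrightarrow> u \<in> I \<rightarrow>\<^sub>E {0..1} \<Longrightarrow> i \<in> I \<Longrightarrow> u i = 0 \<Longrightarrow> C u = 0"
  unfolding is_copula_def by blast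
lemma cop_margin: "is_copula I C \<Longrightarrow> i \<in> I \<Longrightarrow> x \<in> {0..1} \<Longrightarrow> C (restrict (\<lambda>j. if j = i then x else 1) I) = x"
  unfolding is_copula_def by blast
lemma cop_vol: "is_copula I C \<Longrightarrow> a \<in> I \<rightarrow>\<^sub>E {0..1} \<Longrightarrow> b \<in> I \<rightarrow>\<^sub>E {0..1} \<Longrightarrow> (\<forall>i\<in>I. a i \<le> b i) \<Longrightarrow>
   0 \<le> (\<Sum>S\<in>Pow I. (-1::real) ^ card S * C (restrict (\<lambda>i. if i \<in> S then a i else b i) I))"
  unfolding is_copula_def by blast

lemma vol_reduce:
  assumes cop: "is_copula I C" and J: "J \<subseteq> I" and al: "\<alpha> \<in> I \<rightarrow>\<^sub>E {0..1}" and be: "\<beta> \<in> I \<rightarrow>\<^sub>E {0..1}"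
    and z: "\<forall>i\<in>I-J. \<alpha> i = 0"
  shows "(\<Sum>S\<in>Pow I. (-1::real) ^ card S * C (restrict (\<lambda>i. if i \<in> S then \<alpha> i else \<beta> i) I))
       = (\<Sum>S\<in>Pow J. (-1::real) ^ card S * C (restrict (\<lambda>i. if i \<in> S then \<alpha> i else \<beta> i) I))"
proof (rule sum.mono_neutral_right)
  show "finite (Pow I)" using cop_finite[OF cop] by simp
  show "Pow J \<subseteq> Pow I" using J by auto
  show "\<forall>S\<in>Pow I - Pow J. (-1::real) ^ card S * C (restrict (\<lambda>i. if i \<in> S then \<alpha> i else \<beta> i) I) = 0"
  proof
    fix S assume S: "S \<in> Pow I - Pow J"
    then obtain i where i: "i \<in> S" "i \<notin> J" "i \<in> I" by auto
    have "restrict (\<lambda>i. if i \<in> S then \<alpha> i else \<beta> i) I \<in> I \<rightarrow>\<^sub>E {0..1}"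
      using al be by (auto simp: PiE_iff)
    moreover have "restrict (\<lambda>i. if i \<in> S then \<alpha> i else \<beta> i) I i = 0" using i z by auto
    ultimately have "C (restrict (\<lambda>i. if i \<in> S then \<alpha> i else \<beta> i) I) = 0"
      using cop_ground[OF cop] i by blast
    then show "(-1::real) ^ card S * C (restrict (\<lambda>i. if i \<in> S then \<alpha> i else \<beta> i) I) = 0" by simp
  qed
qed

lemma cop_mono1:
  assumes cop: "is_copula I C" and p: "p \<in> I \<rightarrow>\<^sub>E {0..1}" and a: "a \<in> I"
    and xy: "0 \<le> x" "x \<le> y" "y \<le> 1"
  shows "C (p(a:=x)) \<le> C (p(a:=y))"
proof -
  define \<alpha> where "\<alpha> = restrict (\<lambda>i. if i = a then x else 0) I"
  define \<beta> where "\<beta> = p(a:=y)"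
  have al: "\<alpha> \<in> I \<rightarrow>\<^sub>E {0..1}" using xy by (auto simp: \<alpha>_def)
  have be: "\<beta> \<in> I \<rightarrow>\<^sub>E {0..1}" using p a xy by (auto simp: \<beta>_def PiE_iff extensional_def)
  have le: "\<forall>i\<in>I. \<alpha> i \<le> \<beta> i" using p xy by (auto simp: \<alpha>_def \<beta>_def PiE_iff)
  have "0 \<le> (\<Sum>S\<in>Pow I. (-1::real) ^ card S * C (restrict (\<lambda>i. if i \<in> S then \<alpha> i else \<beta> i) I))"
    by (rule cop_vol[OF cop al be le])
  also have "\<dots> = (\<Sum>S\<in>Pow {a}. (-1::real) ^ card S * C (restrict (\<lambda>i. if i \<in> S then \<alpha> i else \<beta> i) I))"
    by (rule vol_reduce[OF cop _ al be]) (auto simp: a \<alpha>_def)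
  also have "Pow {a} = {{}, {a}}" by auto
  also have "(\<Sum>S\<in>{{}, {a}}. (-1::real) ^ card S * C (restrict (\<lambda>i. if i \<in> S then \<alpha> i else \<beta> i) I))
     = C (restrict \<beta> I) - C (restrict (\<lambda>i. if i = a then \<alpha> i else \<beta> i) I)" by simp
  also have "restrict \<beta> I = p(a:=y)" using p a by (auto simp: \<beta>_def PiE_iff extensional_def)
  also have "restrict (\<lambda>i. if i = a then \<alpha> i else \<beta> i) I = p(a:=x)"
    using p a by (auto simp: \<alpha>_def \<beta>_def PiE_iff extensional_def)
  finally show ?thesis by linarith
qed

lemma cop_2inc:
  assumes cop: "is_copula I C" and q: "q \<in> I \<rightarrow>\<^sub>E {0..1}" and a: "a \<in> I" and b: "b \<in> I" and ab: "a \<noteq> b"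
    and xy: "0 \<le> x" "x \<le> y" "y \<le> 1" and zz: "0 \<le> z" "z \<le> z'" "z' \<le> 1"
  shows "C (q(b:=z,a:=y)) - C (q(b:=z,a:=x)) \<le> C (q(b:=z',a:=y)) - C (q(b:=z',a:=x))"
proof -
  define \<alpha> where "\<alpha> = restrict (\<lambda>i. if i = a then x else if i = b then z else 0) I"
  define \<beta> where "\<beta> = q(b:=z',a:=y)"
  have al: "\<alpha> \<in> I \<rightarrow>\<^sub>E {0..1}" using xy zz by (auto simp: \<alpha>_def)
  have be: "\<beta> \<in> I \<rightarrow>\<^sub>E {0..1}" using q a b xy zz by (auto simp: \<beta>_def PiE_iff extensional_def)
  have le: "\<forall>i\<in>I. \<alpha> i \<le> \<beta> i" using q xy zz by (auto simp: \<alpha>_def \<beta>_def PiE_iff)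
  have "0 \<le> (\<Sum>S\<in>Pow I. (-1::real) ^ card S * C (restrict (\<lambda>i. if i \<in> S then \<alpha> i else \<beta> i) I))"
    by (rule cop_vol[OF cop al be le])
  also have "\<dots> = (\<Sum>S\<in>Pow {a,b}. (-1::real) ^ card S * C (restrict (\<lambda>i. if i \<in> S then \<alpha> i else \<beta> i) I))"
    by (rule vol_reduce[OF cop _ al be]) (auto simp: a b \<alpha>_def)
  also have "Pow {a,b} = {{}, {a}, {b}, {a,b}}" by auto
  also have "(\<Sum>S\<in>{{}, {a}, {b}, {a,b}}. (-1::real) ^ card S * C (restrict (\<lambda>i. if i \<in> S then \<alpha> i else \<beta> i) I))
     = C (restrict \<beta> I) - C (restrict (\<lambda>i. if i = a then \<alpha> i else \<beta> i) I)
       - C (restrict (\<lambda>i. if i = b then \<alpha> i else \<beta> i) I)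
       + C (restrict (\<lambda>i. if i = a \<or> i = b then \<alpha> i else \<beta> i) I)" using ab by simp
  also have "restrict \<beta> I = q(b:=z',a:=y)" using q a b by (auto simp: \<beta>_def PiE_iff extensional_def)
  also have "restrict (\<lambda>i. if i = a then \<alpha> i else \<beta> i) I = q(b:=z',a:=x)"
    using q a b by (auto simp: \<alpha>_def \<beta>_def PiE_iff extensional_def)
  also have "restrict (\<lambda>i. if i = b then \<alpha> i else \<beta> i) I = q(b:=z,a:=y)"
    using q a b ab by (auto simp: \<alpha>_def \<beta>_def PiE_iff extensional_def)
  also have "restrict (\<lambda>i. if i = a \<or> i = b then \<alpha> i else \<beta> i) I = q(b:=z,a:=x)"
    using q a b ab by (auto simp: \<alpha>_def \<beta>_def PiE_iff extensional_def)
  finally show ?thesis by linarith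
qed

lemma cop_lip1:
  assumes cop: "is_copula I C" and p: "p \<in> I \<rightarrow>\<^sub>E {0..1}" and a: "a \<in> I"
    and xy: "0 \<le> x" "x \<le> y" "y \<le> 1"
  shows "C (p(a:=y)) - C (p(a:=x)) \<le> y - x"
proof -
  define D where "D q = C (q(a:=y)) - C (q(a:=x))" for q
  define mix where "mix J = restrict (\<lambda>i. if i \<in> J then 1 else p i) I" for J
  have fin: "finite I" using cop_finite[OF cop] .
  have mixP: "mix J \<in> I \<rightarrow>\<^sub>E {0..1}" for J using p by (auto simp: mix_def PiE_iff)
  have "J \<subseteq> I - {a} \<Longrightarrow> D p \<le> D (mix J)" for J
  proof (induction J rule: infinite_finite_induct)
    case (infinite J) then show ?case using fin by (meson finite_Diff finite_subset)
  next
    case empty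
    have "mix {} = p" using p by (auto simp: mix_def PiE_iff extensional_def)
    then show ?case by simp
  next
    case (insert b J)
    have b: "b \<in> I" "b \<noteq> a" using insert by auto
    have IH: "D p \<le> D (mix J)" using insert by auto
    have mb: "mix J b = p b" using insert b by (auto simp: mix_def)
    have pb: "0 \<le> p b" "p b \<le> 1" using p b by (auto simp: PiE_iff)
    have e1: "mix J = (mix J)(b := p b)" using mb by (metis fun_upd_triv)
    have e2: "mix (insert b J) = (mix J)(b := 1)" using b by (auto simp: mix_def)
    have "D (mix J) \<le> D (mix (insert b J))"
      using cop_2inc[OF cop mixP a b(1) b(2)[symmetric] xy pb order.refl] e1 e2
      unfolding D_def by metis
    then show ?case using IH by linarith
  qed
  from this[of "I - {a}"] have 1: "D p \<le> D (mix (I - {a}))" by simp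
  have e3: "(mix (I - {a}))(a:=y) = restrict (\<lambda>j. if j = a then y else 1) I"
    using a by (auto simp: mix_def)
  have e4: "(mix (I - {a}))(a:=x) = restrict (\<lambda>j. if j = a then x else 1) I"
    using a by (auto simp: mix_def)
  have "D (mix (I - {a})) = y - x" unfolding D_def e3 e4 using cop_margin[OF cop a] xy by simp
  then show ?thesis using 1 unfolding D_def by linarith
qed

lemma cop_lip1':
  assumes cop: "is_copula I C" and p: "p \<in> I \<rightarrow>\<^sub>E {0..1}" and a: "a \<in> I"
    and xy: "x \<in> {0..1}" "y \<in> {0..1}"
  shows "\<bar>C (p(a:=y)) - C (p(a:=x))\<bar> \<le> \<bar>y - x\<bar>"
proof (cases "x \<le> y")
  case True
  then show ?thesis using cop_lip1[OF cop p a, of x y] cop_mono1[OF cop p a, of x y] xy by auto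
next
  case False
  then show ?thesis using cop_lip1[OF cop p a, of y x] cop_mono1[OF cop p a, of y x] xy by auto
qed

lemma cop_lip:
  assumes cop: "is_copula I C" and u: "u \<in> I \<rightarrow>\<^sub>E {0..1}" and w: "w \<in> I \<rightarrow>\<^sub>E {0..1}"
  shows "\<bar>C u - C w\<bar> \<le> (\<Sum>i\<in>I. \<bar>u i - w i\<bar>)"
proof -
  define mix where "mix J = restrict (\<lambda>i. if i \<in> J then w i else u i) I" for J
  have fin: "finite I" using cop_finite[OF cop] .
  have mixP: "mix J \<in> I \<rightarrow>\<^sub>E {0..1}" for J using u w by (auto simp: mix_def PiE_iff)
  have "J \<subseteq> I \<Longrightarrow> \<bar>C u - C (mix J)\<bar> \<le> (\<Sum>i\<in>J. \<bar>u i - w i\<bar>)" for J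
  proof (induction J rule: infinite_finite_induct)
    case (infinite J) then show ?case using fin by (meson finite_subset)
  next
    case empty
    have "mix {} = u" using u by (auto simp: mix_def PiE_iff extensional_def)
    then show ?case by simp
  next
    case (insert b J)
    have b: "b \<in> I" using insert by auto
    have IH: "\<bar>C u - C (mix J)\<bar> \<le> (\<Sum>i\<in>J. \<bar>u i - w i\<bar>)" using insert by auto
    have mb: "mix J b = u b" using insert b by (auto simp: mix_def)
    have e1: "mix J = (mix J)(b := u b)" using mb by (metis fun_upd_triv)
    have e2: "mix (insert b J) = (mix J)(b := w b)" using b by (auto simp: mix_def)
    have "\<bar>C ((mix J)(b := w b)) - C ((mix J)(b := u b))\<bar> \<le> \<bar>w b - u b\<bar>"
      by (rule cop_lip1'[OF cop mixP b]) (use u w b in \<open>auto simp: PiE_iff\<close>)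
    then have "\<bar>C (mix (insert b J)) - C (mix J)\<bar> \<le> \<bar>u b - w b\<bar>" using e1 e2 by simp
    then show ?case using IH insert by simp
  qed
  from this[of I] have "\<bar>C u - C (mix I)\<bar> \<le> (\<Sum>i\<in>I. \<bar>u i - w i\<bar>)" by simp
  moreover have "mix I = w" using w by (auto simp: mix_def PiE_iff extensional_def)
  ultimately show ?thesis by simp
qed

definition Fb :: "(nat \<Rightarrow> real \<Rightarrow> real) \<Rightarrow> nat \<Rightarrow> real option \<Rightarrow> real" where
  "Fb Fbar k oc = (case oc of None \<Rightarrow> 1 | Some c \<Rightarrow> Fbar k c)"

definition above :: "real option \<Rightarrow> real \<Rightarrow> bool" where
  "above oc x = (case oc of None \<Rightarrow> True | Some c \<Rightarrow> c < x)"

lemma sets_ev_gen: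
  fixes N :: "'b measure" and L :: nat and n :: "nat \<Rightarrow> nat"
  assumes "\<And>k j. k < L \<Longrightarrow> j < n k \<Longrightarrow> {\<omega>\<in>space N. Q k j \<omega>} \<in> sets N"
  shows "{\<omega>\<in>space N. \<forall>k<L. \<forall>j<n k. Q k j \<omega>} \<in> sets N"
proof -
  have "{\<omega>\<in>space N. \<forall>k\<in>{..<L}. \<forall>j\<in>{..<n k}. Q k j \<omega>} \<in> sets N"
  proof (rule sets.sets_Collect_finite_All)
    fix k assume k: "k \<in> {..<L}"
    show "{\<omega> \<in> space N. \<forall>j\<in>{..<n k}. Q k j \<omega>} \<in> sets N"
    proof (rule sets.sets_Collect_finite_All)
      fix j assume "j \<in> {..<n k}"
      then show "{\<omega> \<in> space N. Q k j \<omega>} \<in> sets N" using k by (intro assms) auto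
    qed (rule finite_lessThan)
  qed (rule finite_lessThan)
  then show ?thesis by (simp only: Ball_def lessThan_iff)
qed

lemma sum_Pow_insert:
  assumes "finite A" "a \<notin> A"
  shows "(\<Sum>S\<in>Pow (insert a A). f S) = (\<Sum>S\<in>Pow A. f S) + (\<Sum>S\<in>Pow A. f (insert a S))"
proof -
  have disjoint: "Pow A \<inter> insert a ` Pow A = {}" using assms by blast
  have inj: "inj_on (insert a) (Pow A)" using assms unfolding inj_on_def by auto
  have "(\<Sum>S\<in>Pow (insert a A). f S) = (\<Sum>S\<in>Pow A \<union> insert a ` Pow A. f S)"
    by (simp only: Pow_insert)
  also have "\<dots> = (\<Sum>S\<in>Pow A. f S) + (\<Sum>S\<in>insert a ` Pow A. f S)"
    by (rule sum.union_disjoint) (use assms disjoint in simp_all)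
  also have "(\<Sum>S\<in>insert a ` Pow A. f S) = (\<Sum>S\<in>Pow A. f (insert a S))"
    using sum.reindex[OF inj, of f] by simp
  finally show ?thesis .
qed

definition below :: "real option \<Rightarrow> real \<Rightarrow> bool" where
  "below oc x = (case oc of None \<Rightarrow> True | Some d \<Rightarrow> x \<le> d)"

locale setting =
  fixes M :: "'a measure"
    and T :: "nat \<Rightarrow> nat \<Rightarrow> 'a \<Rightarrow> real"
    and Fbar :: "nat \<Rightarrow> real \<Rightarrow> real"
    and C :: "(nat \<times> nat \<Rightarrow> real) \<Rightarrow> real"
    and L :: nat and n :: "nat \<Rightarrow> nat"
  assumes PS: "prob_space M"
    and meas: "\<forall>k<L. \<forall>j<n k. T k j \<in> borel_measurable M"
    and rel: "\<forall>k<L. \<forall>j<n k. \<forall>t. Fbar k t = measure M {\<omega>\<in>space M. T k j \<omega> > t}"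
    and exch: "\<forall>\<sigma>. (\<forall>k<L. \<sigma> k permutes {..<n k}) \<longrightarrow>
        distr M (PiM (idx L n) (\<lambda>_. borel)) (\<lambda>\<omega>. restrict (\<lambda>(k,j). T k (\<sigma> k j) \<omega>) (idx L n))
      = distr M (PiM (idx L n) (\<lambda>_. borel)) (\<lambda>\<omega>. restrict (\<lambda>(k,j). T k j \<omega>) (idx L n))"
    and cop: "is_copula (idx L n) C"
    and joint: "\<forall>t :: nat \<Rightarrow> nat \<Rightarrow> real.
        measure M {\<omega>\<in>space M. \<forall>k<L. \<forall>j<n k. T k j \<omega> > t k j}
      = C (restrict (\<lambda>(k,j). Fbar k (t k j)) (idx L n))"
begin

sublocale P: prob_space M by (rule PS)

lemma finI: "finite (idx L n)" by (simp add: idx_def)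

lemma memI[simp]: "(k,j) \<in> idx L n \<longleftrightarrow> k < L \<and> j < n k" by (simp add: idx_def)

lemma Tmeas: "k < L \<Longrightarrow> j < n k \<Longrightarrow> T k j \<in> borel_measurable M" using meas by auto

lemma sets_ev:
  assumes "\<And>k j. k < L \<Longrightarrow> j < n k \<Longrightarrow> {\<omega>\<in>space M. Q k j \<omega>} \<in> sets M"
  shows "{\<omega>\<in>space M. \<forall>k<L. \<forall>j<n k. Q k j \<omega>} \<in> sets M"
proof -
  have "{\<omega>\<in>space M. \<forall>k\<in>{..<L}. \<forall>j\<in>{..<n k}. Q k j \<omega>} \<in> sets M"
  proof (rule sets.sets_Collect_finite_All)
    fix k assume k: "k \<in> {..<L}"
    show "{\<omega> \<in> space M. \<forall>j\<in>{..<n k}. Q k j \<omega>} \<in> sets M"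
      by (rule sets.sets_Collect_finite_All) (use k assms in auto)
  qed (rule finite_lessThan)
  then show ?thesis by (simp only: Ball_def lessThan_iff)
qed

lemma sets_above: "k < L \<Longrightarrow> j < n k \<Longrightarrow> {\<omega>\<in>space M. above oc (T k j \<omega>)} \<in> sets M"
proof -
  assume kj: "k < L" "j < n k"
  note [measurable] = Tmeas[OF kj]
  show ?thesis
  proof (cases oc)
    case None then show ?thesis unfolding above_def None option.case by measurable
  next
    case (Some c) then show ?thesis unfolding above_def Some option.case by measurable
  qed
qed

definition Ev :: "(nat \<times> nat \<Rightarrow> real option) \<Rightarrow> 'a set" where
  "Ev \<theta> = {\<omega>\<in>space M. \<forall>k<L. \<forall>j<n k. above (\<theta> (k,j)) (T k j \<omega>)}"

lemma Ev_sets: "Ev \<theta> \<in> sets M" unfolding Ev_def by (intro sets_ev sets_above)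

lemma Fbar_range: "k < L \<Longrightarrow> j < n k \<Longrightarrow> Fbar k t \<in> {0..1}"
  using rel by auto

lemma Fbar_lim: assumes "k < L" "j < n k" shows "(\<lambda>m. Fbar k (- real m)) \<longlonglongrightarrow> 1"
proof -
  define A where "A m = {\<omega>\<in>space M. - real m < T k j \<omega>}" for m
  note [measurable] = Tmeas[OF assms]
  have "(\<lambda>m. measure M (A m)) \<longlonglongrightarrow> measure M (\<Union>m. A m)"
  proof (rule P.finite_Lim_measure_incseq)
    show "range A \<subseteq> sets M"
    proof (rule subsetI)
      fix X assume "X \<in> range A"
      then obtain m where "X = A m" by blast
      moreover have "A m \<in> sets M" unfolding A_def by measurable
      ultimately show "X \<in> sets M" by simp
    qed
    show "incseq A" unfolding incseq_def A_def
    proof (intro allI impI subsetI)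
      fix m m' x assume "m \<le> m'" "x \<in> {\<omega> \<in> space M. - real m < T k j \<omega>}"
      moreover have "real m \<le> real m'" using \<open>m \<le> m'\<close> by simp
      ultimately show "x \<in> {\<omega> \<in> space M. - real m' < T k j \<omega>}" by auto
    qed
  qed
  moreover have "(\<Union>m. A m) = space M"
  proof (auto simp: A_def)
    fix x obtain m where "- T k j x < real m" using reals_Archimedean2 by blast
    then show "\<exists>m. - real m < T k j x" by (intro exI[of _ m]) linarith
  qed
  moreover have "measure M (A m) = Fbar k (- real m)" for m using rel assms by (simp add: A_def)
  ultimately show ?thesis by (simp add: P.prob_space)
qed

lemma G: "measure M (Ev \<theta>) = C (restrict (\<lambda>(k,j). Fb Fbar k (\<theta> (k,j))) (idx L n))"
proof -
  define tm where "tm m k j = (case \<theta> (k,j) of None \<Rightarrow> - real m | Some c \<Rightarrow> c)" for m k j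
  define E where "E m = {\<omega>\<in>space M. \<forall>k<L. \<forall>j<n k. T k j \<omega> > tm m k j}" for m
  define vm where "vm m = restrict (\<lambda>(k,j). Fbar k (tm m k j)) (idx L n)" for m
  define v where "v = restrict (\<lambda>(k,j). Fb Fbar k (\<theta> (k,j))) (idx L n)"
  have EC: "measure M (E m) = C (vm m)" for m using joint by (simp add: E_def vm_def)
  have Esets: "E m \<in> sets M" for m unfolding E_def
  proof (intro sets_ev)
    fix k j assume kj: "k < L" "j < n k"
    note [measurable] = Tmeas[OF kj]
    show "{\<omega> \<in> space M. tm m k j < T k j \<omega>} \<in> sets M" by measurable
  qed
  have tm_mono: "tm m' k j \<le> tm m k j" if "m \<le> m'" for m m' k j
    using that by (auto simp: tm_def split: option.splits)
  have inc: "incseq E" unfolding incseq_def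
  proof (intro allI impI subsetI)
    fix m m' x assume mm: "m \<le> m'" and x: "x \<in> E m"
    show "x \<in> E m'" unfolding E_def
    proof (intro CollectI conjI allI impI)
      show "x \<in> space M" using x by (simp add: E_def)
      fix k j assume kj: "k < L" "j < n k"
      have "tm m k j < T k j x" using x kj by (simp add: E_def)
      then show "tm m' k j < T k j x" using tm_mono[OF mm, of k j] by linarith
    qed
  qed
  have U: "(\<Union>m. E m) = Ev \<theta>"
  proof
    show "(\<Union>m. E m) \<subseteq> Ev \<theta>"
      by (auto simp: E_def Ev_def tm_def above_def split: option.splits)
    show "Ev \<theta> \<subseteq> (\<Union>m. E m)"
    proof
      fix \<omega> assume w: "\<omega> \<in> Ev \<theta>"
      have "\<forall>kj\<in>idx L n. eventually (\<lambda>m. - real m < T (fst kj) (snd kj) \<omega>) sequentially"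
      proof
        fix kj
        obtain m0 where "- T (fst kj) (snd kj) \<omega> < real m0" using reals_Archimedean2 by blast
        then have "\<forall>m\<ge>m0. - real m < T (fst kj) (snd kj) \<omega>"
        proof (intro allI impI)
          fix m assume "m0 \<le> m" "- T (fst kj) (snd kj) \<omega> < real m0"
          then have "real m0 \<le> real m" by simp
          then show "- real m < T (fst kj) (snd kj) \<omega>" using \<open>- T (fst kj) (snd kj) \<omega> < real m0\<close> by linarith
        qed
        then show "eventually (\<lambda>m. - real m < T (fst kj) (snd kj) \<omega>) sequentially"
          unfolding eventually_sequentially by blast
      qed
      then have "eventually (\<lambda>m. \<forall>kj\<in>idx L n. - real m < T (fst kj) (snd kj) \<omega>) sequentially"
        by (intro eventually_ball_finite finI)
      then obtain m where m: "\<forall>kj\<in>idx L n. - real m < T (fst kj) (snd kj) \<omega>"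
        unfolding eventually_sequentially by auto
      have "\<omega> \<in> E m" unfolding E_def
      proof (intro CollectI conjI allI impI)
        show "\<omega> \<in> space M" using w by (simp add: Ev_def)
        fix k j assume kj: "k < L" "j < n k"
        have a: "above (\<theta> (k,j)) (T k j \<omega>)" using w kj by (simp add: Ev_def)
        have b: "- real m < T k j \<omega>" using m[rule_format, of "(k,j)"] kj by simp
        show "tm m k j < T k j \<omega>" using a b by (cases "\<theta> (k,j)") (auto simp: tm_def above_def)
      qed
      then show "\<omega> \<in> (\<Union>m. E m)" by blast
    qed
  qed
  have L1: "(\<lambda>m. C (vm m)) \<longlonglongrightarrow> measure M (Ev \<theta>)"
    using P.finite_Lim_measure_incseq[of E] Esets inc U EC by auto
  have vmP: "vm m \<in> idx L n \<rightarrow>\<^sub>E {0..1}" for m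
    using Fbar_range by (auto simp: vm_def)
  have vP: "v \<in> idx L n \<rightarrow>\<^sub>E {0..1}"
    using Fbar_range by (auto simp: v_def Fb_def split: option.splits)
  have bound: "norm (C (vm m) - C v) \<le> (\<Sum>i\<in>idx L n. \<bar>vm m i - v i\<bar>)" for m
    using cop_lip[OF cop vmP vP] by simp
  have "(\<lambda>m. \<Sum>i\<in>idx L n. \<bar>vm m i - v i\<bar>) \<longlonglongrightarrow> 0"
  proof (rule tendsto_null_sum)
    fix i assume i: "i \<in> idx L n"
    obtain k j where kj: "i = (k,j)" by force
    have kj': "k < L" "j < n k" using i kj by auto
    show "(\<lambda>m. \<bar>vm m i - v i\<bar>) \<longlonglongrightarrow> 0"
    proof (cases "\<theta> (k,j)")
      case None
      have "(\<lambda>m. \<bar>Fbar k (- real m) - 1\<bar>) \<longlonglongrightarrow> \<bar>1 - 1\<bar>"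
        by (intro tendsto_intros Fbar_lim[OF kj'])
      then show ?thesis using None kj kj' by (simp add: vm_def v_def tm_def Fb_def)
    next
      case (Some c)
      then show ?thesis using kj kj' by (simp add: vm_def v_def tm_def Fb_def)
    qed
  qed
  note S = this
  have "(\<lambda>m. C (vm m) - C v) \<longlonglongrightarrow> 0"
    by (rule Lim_null_comparison[OF _ S]) (rule always_eventually, rule allI, rule bound)
  then have "(\<lambda>m. C (vm m)) \<longlonglongrightarrow> C v"
    by (simp add: LIM_zero_iff)
  then show ?thesis using L1 LIMSEQ_unique unfolding v_def by blast
qed


lemma EXm:
  assumes \<sigma>: "\<forall>k<L. \<sigma> k permutes {..<n k}"
  shows "measure M {\<omega>\<in>space M. \<forall>k<L. \<forall>j<n k. above (\<phi> (k,j)) (T k (\<sigma> k j) \<omega>)} = measure M (Ev \<phi>)"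
proof -
  define N where "N = PiM (idx L n) (\<lambda>_. borel :: real measure)"
  define B where "B = {x\<in>space N. \<forall>k<L. \<forall>j<n k. above (\<phi> (k,j)) (x (k,j))}"
  have Bs: "B \<in> sets N" unfolding B_def
  proof (rule sets_ev_gen)
    fix k j assume kj: "k < L" "j < n k"
    have [measurable]: "(\<lambda>x. x (k,j)) \<in> borel_measurable N" unfolding N_def
      by (rule measurable_component_singleton) (use kj in simp)
    show "{x \<in> space N. above (\<phi> (k, j)) (x (k, j))} \<in> sets N"
    proof (cases "\<phi> (k,j)")
      case None then show ?thesis unfolding above_def None option.case by measurable
    next
      case (Some c) then show ?thesis unfolding above_def Some option.case by measurable
    qed
  qed
  have Xs: "(\<lambda>\<omega>. restrict (\<lambda>(k,j). T k (\<sigma>' k j) \<omega>) (idx L n)) \<in> measurable M N"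
    if \<sigma>': "\<forall>k<L. \<sigma>' k permutes {..<n k}" for \<sigma>'
    unfolding N_def
  proof (rule measurable_restrict)
    fix i assume i: "i \<in> idx L n"
    obtain k j where kj: "i = (k,j)" by force
    have "k < L" "j < n k" using i kj by auto
    then have "\<sigma>' k j < n k" using permutes_in_image[OF \<sigma>'[rule_format, OF \<open>k < L\<close>]] by simp
    then show "(\<lambda>x. case i of (k, j) \<Rightarrow> T k (\<sigma>' k j) x) \<in> borel_measurable M"
      using Tmeas \<open>k < L\<close> kj by simp
  qed
  have idp: "\<forall>k<L. (\<lambda>j. j) permutes {..<n k}"
  proof (intro allI impI)
    fix k show "(\<lambda>j. j) permutes {..<n k}" using permutes_id[of "{..<n k}"] by (simp add: id_def)
  qed
  have pre: "(\<lambda>\<omega>. restrict (\<lambda>(k,j). T k (\<sigma>' k j) \<omega>) (idx L n)) -` B \<inter> space M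
      = {\<omega>\<in>space M. \<forall>k<L. \<forall>j<n k. above (\<phi> (k,j)) (T k (\<sigma>' k j) \<omega>)}" for \<sigma>'
    by (auto simp: B_def N_def space_PiM PiE_iff)
  have D: "distr M N (\<lambda>\<omega>. restrict (\<lambda>(k,j). T k (\<sigma> k j) \<omega>) (idx L n))
      = distr M N (\<lambda>\<omega>. restrict (\<lambda>(k,j). T k j \<omega>) (idx L n))"
    unfolding N_def using exch[rule_format, of \<sigma>] \<sigma> by blast
  have "measure M {\<omega>\<in>space M. \<forall>k<L. \<forall>j<n k. above (\<phi> (k,j)) (T k (\<sigma> k j) \<omega>)}
     = measure (distr M N (\<lambda>\<omega>. restrict (\<lambda>(k,j). T k (\<sigma> k j) \<omega>) (idx L n))) B"
    using measure_distr[OF Xs[OF \<sigma>] Bs] pre[of \<sigma>] by simp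
  also have "\<dots> = measure (distr M N (\<lambda>\<omega>. restrict (\<lambda>(k,j). T k j \<omega>) (idx L n))) B"
    by (simp only: D)
  also have "\<dots> = measure M (Ev \<phi>)"
    using measure_distr[OF Xs[OF idp] Bs] pre[of "\<lambda>k j. j"] by (simp add: Ev_def)
  finally show ?thesis .
qed

lemma EXC:
  assumes \<sigma>: "\<forall>k<L. \<sigma> k permutes {..<n k}"
  shows "C (restrict (\<lambda>(k,j). Fb Fbar k (\<theta> (k,j))) (idx L n))
       = C (restrict (\<lambda>(k,j). Fb Fbar k (\<theta> (k, \<sigma> k j))) (idx L n))"
proof -
  have "Ev \<theta> = {\<omega>\<in>space M. \<forall>k<L. \<forall>j<n k. above (\<theta> (k, \<sigma> k j)) (T k (\<sigma> k j) \<omega>)}"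
  proof -
    have "(\<forall>j<n k. P (\<sigma> k j)) \<longleftrightarrow> (\<forall>j<n k. P j)" if k: "k < L" for k P
    proof -
      have im: "\<sigma> k ` {..<n k} = {..<n k}" using permutes_image[OF \<sigma>[rule_format, OF k]] .
      have "(\<forall>j\<in>{..<n k}. P (\<sigma> k j)) \<longleftrightarrow> (\<forall>j\<in>\<sigma> k ` {..<n k}. P j)" by auto
      then show ?thesis using im by (simp only: Ball_def lessThan_iff)
    qed
    note X = this
    have Y: "(\<forall>j<n k. above (\<theta> (k, \<sigma> k j)) (T k (\<sigma> k j) \<omega>)) \<longleftrightarrow> (\<forall>j<n k. above (\<theta> (k,j)) (T k j \<omega>))"
      if "k < L" for k \<omega> using X[OF that, of "\<lambda>j. above (\<theta> (k,j)) (T k j \<omega>)"] by simp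
    show ?thesis unfolding Ev_def
    proof (intro Collect_cong conj_cong refl)
      fix \<omega> show "(\<forall>k<L. \<forall>j<n k. above (\<theta> (k, j)) (T k j \<omega>)) =
                 (\<forall>k<L. \<forall>j<n k. above (\<theta> (k, \<sigma> k j)) (T k (\<sigma> k j) \<omega>))"
        using Y by simp
    qed
  qed
  then have "measure M (Ev \<theta>) = measure M (Ev (\<lambda>(k,j). \<theta> (k, \<sigma> k j)))"
    using EXm[OF \<sigma>, of "\<lambda>(k,j). \<theta> (k, \<sigma> k j)"] by simp
  then show ?thesis using G[of \<theta>] G[of "\<lambda>(k,j). \<theta> (k, \<sigma> k j)"] by simp
qed


lemma perm_exists:
  fixes c c' :: "nat \<Rightarrow> nat"
  assumes "\<forall>x. card {j. j < m \<and> c j = x} = card {j. j < m \<and> c' j = x}"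
  shows "\<exists>p. p permutes {..<m} \<and> (\<forall>j<m. c (p j) = c' j)"
proof -
  have cnt: "count (mset (map f [0..<m])) x = card {j. j < m \<and> f j = x}" for f :: "nat \<Rightarrow> nat" and x
  proof -
    have "count (mset (map f [0..<m])) x = length (filter ((=) x) (map f [0..<m]))"
      by (metis length_replicate replicate_count_mset_eq_filter_eq)
    also have "\<dots> = card {i. i < length (map f [0..<m]) \<and> x = map f [0..<m] ! i}"
      by (rule length_filter_conv_card)
    also have "{i. i < length (map f [0..<m]) \<and> x = map f [0..<m] ! i} = {i. i < m \<and> x = f i}"
      by auto
    also have "card {i. i < m \<and> x = f i} = card {j. j < m \<and> f j = x}"
      by (rule arg_cong[where f=card]) auto
    finally show ?thesis .
  qed
  have "mset (map c' [0..<m]) = mset (map c [0..<m])"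
    by (rule multiset_eqI) (simp only: cnt assms)
  then obtain p where p: "p permutes {..<length (map c [0..<m])}"
    "permute_list p (map c [0..<m]) = map c' [0..<m]"
    by (rule mset_eq_permutation)
  have pm: "p permutes {..<m}" using p(1) by simp
  have "c (p j) = c' j" if j: "j < m" for j
  proof -
    have "permute_list p (map c [0..<m]) ! j = map c [0..<m] ! p j"
      by (rule permute_list_nth) (use p(1) j in auto)
    moreover have "p j < m" using permutes_in_image[OF pm] j by simp
    ultimately show ?thesis using p(2) j by simp
  qed
  then show ?thesis using pm by blast
qed

lemma EXcode:
  fixes c c' :: "nat \<Rightarrow> nat \<Rightarrow> nat" and val :: "nat \<Rightarrow> nat \<Rightarrow> real" and v :: "nat \<times> nat \<Rightarrow> real"
  assumes h1: "\<forall>k<L. \<forall>j<n k. Fb Fbar k (\<theta> (k,j)) = val k (c k j)"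
      and h2: "\<forall>k<L. \<forall>j<n k. v (k,j) = val k (c' k j)"
      and h3: "\<forall>k<L. \<forall>x. card {j. j < n k \<and> c k j = x} = card {j. j < n k \<and> c' k j = x}"
  shows "C (restrict (\<lambda>(k,j). Fb Fbar k (\<theta> (k,j))) (idx L n)) = C (restrict v (idx L n))"
proof -
  define \<sigma> where "\<sigma> k = (if k < L then (SOME p. p permutes {..<n k} \<and> (\<forall>j<n k. c k (p j) = c' k j)) else id)" for k
  have \<sigma>P: "\<sigma> k permutes {..<n k} \<and> (\<forall>j<n k. c k (\<sigma> k j) = c' k j)" if k: "k < L" for k
  proof -
    have "\<exists>p. p permutes {..<n k} \<and> (\<forall>j<n k. c k (p j) = c' k j)"
      by (intro perm_exists allI) (simp add: h3[rule_format, OF k])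
    from someI_ex[OF this] show ?thesis unfolding \<sigma>_def using k by simp
  qed
  then have \<sigma>: "\<forall>k<L. \<sigma> k permutes {..<n k}" by blast
  have "C (restrict (\<lambda>(k,j). Fb Fbar k (\<theta> (k,j))) (idx L n))
       = C (restrict (\<lambda>(k,j). Fb Fbar k (\<theta> (k, \<sigma> k j))) (idx L n))" by (rule EXC[OF \<sigma>])
  also have "restrict (\<lambda>(k,j). Fb Fbar k (\<theta> (k, \<sigma> k j))) (idx L n) = restrict v (idx L n)"
  proof (rule restrict_ext)
    fix i assume i: "i \<in> idx L n"
    obtain k j where kj: "i = (k,j)" by (cases i)
    have k: "k < L" and j: "j < n k" using i kj by auto
    have sj: "\<sigma> k j < n k" using permutes_in_image[OF \<sigma>[rule_format, OF k]] j by simp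
    have "Fb Fbar k (\<theta> (k, \<sigma> k j)) = val k (c k (\<sigma> k j))" using h1 k sj by blast
    also have "\<dots> = val k (c' k j)" using \<sigma>P[OF k] j by simp
    also have "\<dots> = v (k,j)" using h2 k j by simp
    finally show "(case i of (k, j) \<Rightarrow> Fb Fbar k (\<theta> (k, \<sigma> k j))) = v i" using kj by simp
  qed
  finally show ?thesis .
qed


definition Ev2 :: "(nat \<times> nat \<Rightarrow> real option) \<Rightarrow> (nat \<times> nat \<Rightarrow> real option) \<Rightarrow> 'a set" where
  "Ev2 lo hi = {\<omega>\<in>space M. \<forall>k<L. \<forall>j<n k. above (lo (k,j)) (T k j \<omega>) \<and> below (hi (k,j)) (T k j \<omega>)}"

lemma Ev2_sets: "Ev2 lo hi \<in> sets M" unfolding Ev2_def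
proof (rule sets_ev)
  fix k j assume kj: "k < L" "j < n k"
  note [measurable] = Tmeas[OF kj]
  show "{\<omega> \<in> space M. above (lo (k, j)) (T k j \<omega>) \<and> below (hi (k, j)) (T k j \<omega>)} \<in> sets M"
  proof (cases "lo (k,j)")
    case None
    then show ?thesis
    proof (cases "hi (k,j)")
      case None
      then show ?thesis using \<open>lo (k,j) = None\<close> unfolding above_def below_def by simp
    next
      case (Some d)
      then show ?thesis using \<open>lo (k,j) = None\<close> unfolding above_def below_def by simp
    qed
  next
    case (Some c)
    then show ?thesis
    proof (cases "hi (k,j)")
      case None
      then show ?thesis using \<open>lo (k,j) = Some c\<close> unfolding above_def below_def by simp
    next
      case (Some d)
      then show ?thesis using \<open>lo (k,j) = Some c\<close> unfolding above_def below_def by simp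
    qed
  qed
qed

definition compat :: "(nat \<times> nat \<Rightarrow> real option) \<Rightarrow> (nat \<times> nat \<Rightarrow> real option) \<Rightarrow> bool" where
  "compat lo hi = (\<forall>i\<in>idx L n. \<forall>c d. lo i = Some c \<longrightarrow> hi i = Some d \<longrightarrow> c \<le> d)"

lemma IE_aux:
  assumes "finite H"
  shows "\<forall>lo hi. compat lo hi \<longrightarrow> {i\<in>idx L n. hi i \<noteq> None} = H \<longrightarrow>
     measure M (Ev2 lo hi) = (\<Sum>S\<in>Pow H. (-1::real) ^ card S * measure M (Ev (\<lambda>i. if i \<in> S then hi i else lo i)))"
  using assms
proof (induction H rule: finite_induct)
  case empty
  show ?case
  proof (intro allI impI)
    fix lo hi :: "nat \<times> nat \<Rightarrow> real option"
    assume "{i\<in>idx L n. hi i \<noteq> None} = {}"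
    then have hN: "k < L \<Longrightarrow> j < n k \<Longrightarrow> hi (k,j) = None" for k j by auto
    have "Ev2 lo hi = Ev lo" unfolding Ev2_def Ev_def using hN by (auto simp: below_def)
    then show "measure M (Ev2 lo hi) = (\<Sum>S\<in>Pow {}. (-1::real) ^ card S * measure M (Ev (\<lambda>i. if i \<in> S then hi i else lo i)))"
      by simp
  qed
next
  case (insert a H')
  show ?case
  proof (intro allI impI)
    fix lo hi :: "nat \<times> nat \<Rightarrow> real option"
    assume cp: "compat lo hi" and HH: "{i\<in>idx L n. hi i \<noteq> None} = insert a H'"
    have aI: "a \<in> idx L n" and ha: "hi a \<noteq> None" using HH by auto
    obtain d where d: "hi a = Some d" using ha by auto
    obtain k0 j0 where a: "a = (k0,j0)" by (cases a)
    have k0: "k0 < L" "j0 < n k0" using aI a by auto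
    define hi' where "hi' = hi(a := None)"
    define lo' where "lo' = lo(a := Some d)"
    have cp1: "compat lo hi'" using cp unfolding compat_def hi'_def by auto
    have cp2: "compat lo' hi'" using cp unfolding compat_def hi'_def lo'_def by auto
    have H1: "{i\<in>idx L n. hi' i \<noteq> None} = H'" using HH insert.hyps(2) unfolding hi'_def by auto
    have IH1: "measure M (Ev2 lo hi') = (\<Sum>S\<in>Pow H'. (-1::real) ^ card S * measure M (Ev (\<lambda>i. if i \<in> S then hi' i else lo i)))"
      using insert.IH cp1 H1 by blast
    have IH2: "measure M (Ev2 lo' hi') = (\<Sum>S\<in>Pow H'. (-1::real) ^ card S * measure M (Ev (\<lambda>i. if i \<in> S then hi' i else lo' i)))"
      using insert.IH cp2 H1 by blast
    have sub: "Ev2 lo' hi' \<subseteq> Ev2 lo hi'"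
    proof
      fix \<omega> assume w: "\<omega> \<in> Ev2 lo' hi'"
      show "\<omega> \<in> Ev2 lo hi'" unfolding Ev2_def
      proof (intro CollectI conjI allI impI)
        show "\<omega> \<in> space M" using w by (simp add: Ev2_def)
        fix k j assume kj: "k < L" "j < n k"
        have w1: "above (lo' (k,j)) (T k j \<omega>)" and w2: "below (hi' (k,j)) (T k j \<omega>)"
          using w kj by (auto simp: Ev2_def)
        show "below (hi' (k,j)) (T k j \<omega>)" by (rule w2)
        show "above (lo (k,j)) (T k j \<omega>)"
        proof (cases "(k,j) = a")
          case True
          then have "d < T k j \<omega>" using w1 by (simp add: lo'_def above_def)
          moreover have "lo a = Some c \<Longrightarrow> c \<le> d" for c using cp aI d unfolding compat_def by blast
          ultimately show ?thesis using True by (cases "lo a") (auto simp: above_def)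
        next
          case False
          then show ?thesis using w1 by (simp add: lo'_def)
        qed
      qed
    qed
    have eq: "Ev2 lo hi = Ev2 lo hi' - Ev2 lo' hi'"
    proof (intro equalityI subsetI)
      fix \<omega> assume w: "\<omega> \<in> Ev2 lo hi"
      have "below (hi (k0,j0)) (T k0 j0 \<omega>)" using w k0 unfolding Ev2_def by blast
      then have wa: "T k0 j0 \<omega> \<le> d" using d a by (simp add: below_def)
      have "\<omega> \<in> Ev2 lo hi'" using w by (auto simp: Ev2_def hi'_def below_def)
      moreover have "\<omega> \<notin> Ev2 lo' hi'"
      proof
        assume "\<omega> \<in> Ev2 lo' hi'"
        then have "above (lo' (k0,j0)) (T k0 j0 \<omega>)" using k0 by (auto simp: Ev2_def)
        then show False using wa a by (simp add: lo'_def above_def)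
      qed
      ultimately show "\<omega> \<in> Ev2 lo hi' - Ev2 lo' hi'" by blast
    next
      fix \<omega> assume w: "\<omega> \<in> Ev2 lo hi' - Ev2 lo' hi'"
      then have w1: "\<omega> \<in> Ev2 lo hi'" and w2: "\<omega> \<notin> Ev2 lo' hi'" by auto
      have wa: "T k0 j0 \<omega> \<le> d"
      proof (rule ccontr)
        assume "\<not> T k0 j0 \<omega> \<le> d"
        then have "\<omega> \<in> Ev2 lo' hi'" using w1 a unfolding Ev2_def
          by (auto simp: lo'_def above_def)
        then show False using w2 by blast
      qed
      show "\<omega> \<in> Ev2 lo hi" unfolding Ev2_def
      proof (intro CollectI conjI allI impI)
        show "\<omega> \<in> space M" using w1 by (simp add: Ev2_def)
        fix k j assume kj: "k < L" "j < n k"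
        show "above (lo (k,j)) (T k j \<omega>)" using w1 kj by (auto simp: Ev2_def)
        show "below (hi (k,j)) (T k j \<omega>)"
        proof (cases "(k,j) = a")
          case True then show ?thesis using wa a d by (simp add: below_def)
        next
          case False
          have "below (hi' (k,j)) (T k j \<omega>)" using w1 kj unfolding Ev2_def by blast
          then show ?thesis using False by (simp add: hi'_def)
        qed
      qed
    qed
    have m: "measure M (Ev2 lo hi) = measure M (Ev2 lo hi') - measure M (Ev2 lo' hi')"
      unfolding eq by (rule P.finite_measure_Diff[OF Ev2_sets Ev2_sets sub])
    have s1: "(\<lambda>i. if i \<in> S then hi i else lo i) = (\<lambda>i. if i \<in> S then hi' i else lo i)"
      if "S \<in> Pow H'" for S unfolding hi'_def using that insert.hyps(2) by (intro ext) auto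
    have s2: "(\<lambda>i. if i \<in> insert a S then hi i else lo i) = (\<lambda>i. if i \<in> S then hi' i else lo' i)"
      if "S \<in> Pow H'" for S unfolding hi'_def lo'_def using that insert.hyps(2) d by (intro ext) auto
    have c2: "card (insert a S) = Suc (card S)" if "S \<in> Pow H'" for S
      using that insert.hyps finite_subset by (subst card_insert_disjoint) auto
    have "(\<Sum>S\<in>Pow (insert a H'). (-1::real) ^ card S * measure M (Ev (\<lambda>i. if i \<in> S then hi i else lo i)))
       = (\<Sum>S\<in>Pow H'. (-1::real) ^ card S * measure M (Ev (\<lambda>i. if i \<in> S then hi i else lo i)))
       + (\<Sum>S\<in>Pow H'. (-1::real) ^ card (insert a S) * measure M (Ev (\<lambda>i. if i \<in> insert a S then hi i else lo i)))"
      by (rule sum_Pow_insert[OF insert.hyps])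
    also have "(\<Sum>S\<in>Pow H'. (-1::real) ^ card S * measure M (Ev (\<lambda>i. if i \<in> S then hi i else lo i)))
       = measure M (Ev2 lo hi')" unfolding IH1 by (rule sum.cong) (simp_all add: s1)
    also have "(\<Sum>S\<in>Pow H'. (-1::real) ^ card (insert a S) * measure M (Ev (\<lambda>i. if i \<in> insert a S then hi i else lo i)))
       = - measure M (Ev2 lo' hi')" unfolding IH2 sum_negf[symmetric]
    proof (rule sum.cong[OF refl])
      fix S assume S: "S \<in> Pow H'"
      show "(-1::real) ^ card (insert a S) * measure M (Ev (\<lambda>i. if i \<in> insert a S then hi i else lo i))
          = - ((-1::real) ^ card S * measure M (Ev (\<lambda>i. if i \<in> S then hi' i else lo' i)))"
        unfolding s2[OF S] c2[OF S] by simp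
    qed
    finally show "measure M (Ev2 lo hi) = (\<Sum>S\<in>Pow (insert a H'). (-1::real) ^ card S * measure M (Ev (\<lambda>i. if i \<in> S then hi i else lo i)))"
      using m by simp
  qed
qed

end

lemma RG:
  fixes A :: "nat \<Rightarrow> nat set" and K :: "nat set" and g :: "(nat \<Rightarrow> nat) \<Rightarrow> real" and m :: "nat \<Rightarrow> nat"
  assumes fK: "finite K" and fA: "\<forall>k\<in>K. finite (A k)" and cA: "\<forall>k\<in>K. card (A k) = m k"
  shows "(\<Sum>S\<in>Pow (Sigma K A). (-1::real) ^ card S * g (\<lambda>k\<in>K. card {j. (k,j) \<in> S}))
       = (\<Sum>bs\<in>PiE K (\<lambda>k. {0..m k}). (-1::real) ^ (\<Sum>k\<in>K. bs k) * (\<Prod>k\<in>K. real (m k choose bs k)) * g bs)"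
proof -
  define P where "P = PiE K (\<lambda>k. Pow (A k))"
  define h where "h X = (-1::real) ^ (\<Sum>k\<in>K. card (X k)) * g (\<lambda>k\<in>K. card (X k))" for X :: "nat \<Rightarrow> nat set"
  have bij: "bij_betw (\<lambda>X. Sigma K X) P (Pow (Sigma K A))"
  proof (rule bij_betwI')
    fix X Y assume X: "X \<in> P" and Y: "Y \<in> P"
    show "(Sigma K X = Sigma K Y) = (X = Y)"
    proof
      assume e: "Sigma K X = Sigma K Y"
      show "X = Y"
      proof (rule extensionalityI[of _ K])
        show "X \<in> extensional K" "Y \<in> extensional K" using X Y by (auto simp: P_def PiE_def)
        fix k assume k: "k \<in> K"
        have "X k = {j. (k,j) \<in> Sigma K X}" using k by auto
        also have "\<dots> = {j. (k,j) \<in> Sigma K Y}" using e by simp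
        also have "\<dots> = Y k" using k by auto
        finally show "X k = Y k" .
      qed
    qed simp
  next
    fix X assume "X \<in> P" then show "Sigma K X \<in> Pow (Sigma K A)" by (auto simp: P_def PiE_def Pi_def)
  next
    fix S assume S: "S \<in> Pow (Sigma K A)"
    define X where "X = (\<lambda>k\<in>K. {j. (k,j) \<in> S})"
    have "X \<in> P" using S by (auto simp: P_def X_def)
    moreover have "S = Sigma K X" using S by (auto simp: X_def)
    ultimately show "\<exists>X\<in>P. S = Sigma K X" by blast
  qed
  have fX: "X \<in> P \<Longrightarrow> k \<in> K \<Longrightarrow> finite (X k)" for X k
    using fA by (auto simp: P_def PiE_def Pi_def intro: finite_subset)
  have "(\<Sum>S\<in>Pow (Sigma K A). (-1::real) ^ card S * g (\<lambda>k\<in>K. card {j. (k,j) \<in> S}))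
      = (\<Sum>X\<in>P. (-1::real) ^ card (Sigma K X) * g (\<lambda>k\<in>K. card {j. (k,j) \<in> Sigma K X}))"
    by (rule sum.reindex_bij_betw[OF bij, symmetric])
  also have "\<dots> = (\<Sum>X\<in>P. h X)"
  proof (rule sum.cong[OF refl])
    fix X assume X: "X \<in> P"
    have "card (Sigma K X) = (\<Sum>k\<in>K. card (X k))" using fK fX[OF X] by simp
    moreover have "(\<lambda>k\<in>K. card {j. (k,j) \<in> Sigma K X}) = (\<lambda>k\<in>K. card (X k))"
      by (rule restrict_ext) auto
    ultimately show "(-1::real) ^ card (Sigma K X) * g (\<lambda>k\<in>K. card {j. (k,j) \<in> Sigma K X}) = h X"
      by (simp add: h_def)
  qed
  also have "\<dots> = (\<Sum>bs\<in>PiE K (\<lambda>k. {0..m k}). \<Sum>X\<in>{X. X \<in> P \<and> (\<lambda>k\<in>K. card (X k)) = bs}. h X)"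
  proof (rule sum.group[symmetric])
    show "finite P" unfolding P_def using fK fA by (auto intro!: finite_PiE)
    show "finite (PiE K (\<lambda>k. {0..m k}))" using fK by (auto intro!: finite_PiE)
    show "(\<lambda>X. \<lambda>k\<in>K. card (X k)) ` P \<subseteq> PiE K (\<lambda>k. {0..m k})"
    proof
      fix b assume "b \<in> (\<lambda>X. \<lambda>k\<in>K. card (X k)) ` P"
      then obtain X where X: "X \<in> P" and b: "b = (\<lambda>k\<in>K. card (X k))" by blast
      have "card (X k) \<le> m k" if k: "k \<in> K" for k
        using card_mono[of "A k" "X k"] fA cA X k by (auto simp: P_def PiE_def Pi_def)
      then show "b \<in> PiE K (\<lambda>k. {0..m k})" using b by auto
    qed
  qed
  also have "\<dots> = (\<Sum>bs\<in>PiE K (\<lambda>k. {0..m k}). (-1::real) ^ (\<Sum>k\<in>K. bs k) * (\<Prod>k\<in>K. real (m k choose bs k)) * g bs)"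
  proof (rule sum.cong[OF refl])
    fix bs assume bs: "bs \<in> PiE K (\<lambda>k. {0..m k})"
    have fib: "{X. X \<in> P \<and> (\<lambda>k\<in>K. card (X k)) = bs} = PiE K (\<lambda>k. {Y. Y \<subseteq> A k \<and> card Y = bs k})"
    proof (intro equalityI subsetI)
      fix X assume "X \<in> {X. X \<in> P \<and> (\<lambda>k\<in>K. card (X k)) = bs}"
      then have X: "X \<in> P" and e: "(\<lambda>k\<in>K. card (X k)) = bs" by auto
      have "card (X k) = bs k" if "k \<in> K" for k using e that by (metis restrict_apply')
      then show "X \<in> PiE K (\<lambda>k. {Y. Y \<subseteq> A k \<and> card Y = bs k})" using X by (auto simp: P_def PiE_def Pi_def)
    next
      fix X assume X: "X \<in> PiE K (\<lambda>k. {Y. Y \<subseteq> A k \<and> card Y = bs k})"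
      then have "X \<in> P" by (auto simp: P_def PiE_def Pi_def)
      moreover have "(\<lambda>k\<in>K. card (X k)) = bs"
      proof (rule extensionalityI[of _ K])
        show "(\<lambda>k\<in>K. card (X k)) \<in> extensional K" by simp
        show "bs \<in> extensional K" using bs by (simp add: PiE_def)
        fix k assume "k \<in> K" then show "(\<lambda>k\<in>K. card (X k)) k = bs k" using X by (auto simp: PiE_def Pi_def)
      qed
      ultimately show "X \<in> {X. X \<in> P \<and> (\<lambda>k\<in>K. card (X k)) = bs}" by blast
    qed
    have hX: "h X = (-1::real) ^ (\<Sum>k\<in>K. bs k) * g bs" if "X \<in> {X. X \<in> P \<and> (\<lambda>k\<in>K. card (X k)) = bs}" for X
    proof -
      have e: "(\<lambda>k\<in>K. card (X k)) = bs" using that by auto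
      have "(\<Sum>k\<in>K. card (X k)) = (\<Sum>k\<in>K. bs k)" using e by (intro sum.cong refl) (metis restrict_apply')
      then show ?thesis unfolding h_def e by simp
    qed
    have "(\<Sum>X\<in>{X. X \<in> P \<and> (\<lambda>k\<in>K. card (X k)) = bs}. h X)
        = (\<Sum>X\<in>{X. X \<in> P \<and> (\<lambda>k\<in>K. card (X k)) = bs}. (-1::real) ^ (\<Sum>k\<in>K. bs k) * g bs)"
      by (rule sum.cong[OF refl]) (rule hX)
    also have "\<dots> = real (card {X. X \<in> P \<and> (\<lambda>k\<in>K. card (X k)) = bs}) * ((-1::real) ^ (\<Sum>k\<in>K. bs k) * g bs)"
      by simp
    also have "card {X. X \<in> P \<and> (\<lambda>k\<in>K. card (X k)) = bs} = (\<Prod>k\<in>K. m k choose bs k)"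
    proof -
      have "card {X. X \<in> P \<and> (\<lambda>k\<in>K. card (X k)) = bs} = (\<Prod>k\<in>K. card {Y. Y \<subseteq> A k \<and> card Y = bs k})"
        unfolding fib using fK by (rule card_PiE)
      also have "\<dots> = (\<Prod>k\<in>K. m k choose bs k)"
      proof (rule prod.cong[OF refl])
        fix k assume k: "k \<in> K"
        show "card {Y. Y \<subseteq> A k \<and> card Y = bs k} = m k choose bs k"
          using n_subsets[of "A k" "bs k"] fA cA k by simp
      qed
      finally show ?thesis .
    qed
    finally show "(\<Sum>X\<in>{X. X \<in> P \<and> (\<lambda>k\<in>K. card (X k)) = bs}. h X)
        = (-1::real) ^ (\<Sum>k\<in>K. bs k) * (\<Prod>k\<in>K. real (m k choose bs k)) * g bs"
      by (simp only: of_nat_prod mult_ac)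
  qed
  finally show ?thesis .
qed


lemma sum_Pow_Un:
  assumes fA: "finite A" and fB: "finite B" and d: "A \<inter> B = {}"
  shows "(\<Sum>S\<in>Pow (A \<union> B). f S) = (\<Sum>X\<in>Pow A. \<Sum>Y\<in>Pow B. f (X \<union> Y))"
proof -
  have bij: "bij_betw (\<lambda>(X,Y). X \<union> Y) (Pow A \<times> Pow B) (Pow (A \<union> B))"
  proof (rule bij_betwI')
    fix u v assume u: "u \<in> Pow A \<times> Pow B" and v: "v \<in> Pow A \<times> Pow B"
    obtain X Y where uu: "u = (X,Y)" by (cases u)
    obtain X' Y' where vv: "v = (X',Y')" by (cases v)
    have X: "X \<subseteq> A" "Y \<subseteq> B" "X' \<subseteq> A" "Y' \<subseteq> B" using u v uu vv by auto
    show "((case u of (X, Y) \<Rightarrow> X \<union> Y) = (case v of (X, Y) \<Rightarrow> X \<union> Y)) = (u = v)"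
    proof
      assume e: "(case u of (X, Y) \<Rightarrow> X \<union> Y) = (case v of (X, Y) \<Rightarrow> X \<union> Y)"
      then have e': "X \<union> Y = X' \<union> Y'" using uu vv by simp
      have "X = (X \<union> Y) \<inter> A" "X' = (X' \<union> Y') \<inter> A" "Y = (X \<union> Y) \<inter> B" "Y' = (X' \<union> Y') \<inter> B"
        using X d by auto
      then show "u = v" using e' uu vv by metis
    qed simp
  next
    fix u assume "u \<in> Pow A \<times> Pow B" then show "(case u of (X, Y) \<Rightarrow> X \<union> Y) \<in> Pow (A \<union> B)" by auto
  next
    fix S assume "S \<in> Pow (A \<union> B)"
    then have "(S \<inter> A, S \<inter> B) \<in> Pow A \<times> Pow B" "S = (case (S \<inter> A, S \<inter> B) of (X, Y) \<Rightarrow> X \<union> Y)" by auto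
    then show "\<exists>u\<in>Pow A \<times> Pow B. S = (case u of (X, Y) \<Rightarrow> X \<union> Y)" by blast
  qed
  have "(\<Sum>S\<in>Pow (A \<union> B). f S) = (\<Sum>u\<in>Pow A \<times> Pow B. f (case u of (X, Y) \<Rightarrow> X \<union> Y))"
    by (rule sum.reindex_bij_betw[OF bij, symmetric])
  also have "\<dots> = (\<Sum>X\<in>Pow A. \<Sum>Y\<in>Pow B. f (X \<union> Y))"
    by (simp add: sum.cartesian_product split_def)
  finally show ?thesis .
qed

lemma card_a:
  fixes Sk :: "nat set"
  assumes S: "Sk \<subseteq> {..<js}" and js: "js \<le> nn"
  shows "card {j. j < nn \<and> (if j \<in> Sk \<or> js \<le> j then 1 else 0) = (x::nat)}
       = card {j. j < nn \<and> (if j < nn - js + card Sk then 1 else 0) = x}"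
proof -
  have fS: "finite Sk" using S finite_subset by blast
  have cS: "card Sk \<le> js" using card_mono[OF _ S] by simp
  consider "x = 1" | "x = 0" | "x \<noteq> 0 \<and> x \<noteq> 1" by blast
  then show ?thesis
  proof cases
    case 1
    have "{j. j < nn \<and> (if j \<in> Sk \<or> js \<le> j then 1 else 0) = x} = Sk \<union> {js..<nn}"
      using 1 S js by auto
    moreover have "card (Sk \<union> {js..<nn}) = card Sk + (nn - js)"
      by (subst card_Un_disjoint) (use S fS in auto)
    moreover have "{j. j < nn \<and> (if j < nn - js + card Sk then 1 else 0) = x} = {..<nn - js + card Sk}"
      using 1 js cS by auto
    ultimately show ?thesis using js cS by simp
  next
    case 2
    have "{j. j < nn \<and> (if j \<in> Sk \<or> js \<le> j then 1 else 0) = x} = {..<js} - Sk"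
      using 2 S js by auto
    moreover have "card ({..<js} - Sk) = js - card Sk"
      by (subst card_Diff_subset) (use S fS in auto)
    moreover have "{j. j < nn \<and> (if j < nn - js + card Sk then 1 else 0) = x} = {nn - js + card Sk..<nn}"
      using 2 js cS by auto
    ultimately show ?thesis using js cS by simp
  next
    case 3
    then show ?thesis by simp
  qed
qed

context setting
begin

lemma partA:
  assumes js: "\<forall>k<L. js k \<le> n k"
  shows "measure M {\<omega>\<in>space M. \<forall>k<L. (\<forall>j<js k. T k j \<omega> \<le> \<tau>) \<and>
                                    (\<forall>j. js k \<le> j \<and> j < n k \<longrightarrow> T k j \<omega> > \<tau>)}
      = (\<Sum>bs\<in>PiE {..<L} (\<lambda>k. {0..js k}).
           (-1::real) ^ (\<Sum>k<L. bs k) * (\<Prod>k<L. real (js k choose bs k)) *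
           C (restrict (\<lambda>(k,j). if j < n k - js k + bs k then Fbar k \<tau> else 1) (idx L n)))"
proof -
  define lo :: "nat \<times> nat \<Rightarrow> real option" where "lo = (\<lambda>(k,j). if j < js k then None else Some \<tau>)"
  define hi :: "nat \<times> nat \<Rightarrow> real option" where "hi = (\<lambda>(k,j). if j < js k then Some \<tau> else None)"
  define H where "H = Sigma {..<L} (\<lambda>k. {..<js k})"
  define g where "g bs = C (restrict (\<lambda>(k,j). if j < n k - js k + bs k then Fbar k \<tau> else 1) (idx L n))" for bs
  have fH: "finite H" unfolding H_def by auto
  have HH: "{i\<in>idx L n. hi i \<noteq> None} = H" using js by (force simp: hi_def H_def split: if_splits)
  have cp: "compat lo hi" unfolding compat_def lo_def hi_def by (auto split: if_splits)
  have ev: "{\<omega>\<in>space M. \<forall>k<L. (\<forall>j<js k. T k j \<omega> \<le> \<tau>) \<and>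
                                    (\<forall>j. js k \<le> j \<and> j < n k \<longrightarrow> T k j \<omega> > \<tau>)} = Ev2 lo hi"
    unfolding Ev2_def
  proof (intro Collect_cong conj_cong refl)
    fix \<omega>
    have "((\<forall>j<js k. T k j \<omega> \<le> \<tau>) \<and> (\<forall>j. js k \<le> j \<and> j < n k \<longrightarrow> T k j \<omega> > \<tau>))
       = (\<forall>j<n k. above (lo (k, j)) (T k j \<omega>) \<and> below (hi (k, j)) (T k j \<omega>))" if k: "k < L" for k
      using js k by (auto simp: lo_def hi_def above_def below_def)
    then show "(\<forall>k<L. (\<forall>j<js k. T k j \<omega> \<le> \<tau>) \<and> (\<forall>j. js k \<le> j \<and> j < n k \<longrightarrow> \<tau> < T k j \<omega>)) =
      (\<forall>k<L. \<forall>j<n k. above (lo (k, j)) (T k j \<omega>) \<and> below (hi (k, j)) (T k j \<omega>))" by simp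
  qed
  have "measure M (Ev2 lo hi) = (\<Sum>S\<in>Pow H. (-1::real) ^ card S * measure M (Ev (\<lambda>i. if i \<in> S then hi i else lo i)))"
    using IE_aux[OF fH] cp HH by blast
  also have "\<dots> = (\<Sum>S\<in>Pow H. (-1::real) ^ card S * g (\<lambda>k\<in>{..<L}. card {j. (k,j) \<in> S}))"
  proof (rule sum.cong[OF refl])
    fix S assume S: "S \<in> Pow H"
    define bk where "bk = (\<lambda>k\<in>{..<L}. card {j. (k,j) \<in> S})"
    have Sk: "{j. (k,j) \<in> S} \<subseteq> {..<js k}" for k using S by (auto simp: H_def)
    have "measure M (Ev (\<lambda>i. if i \<in> S then hi i else lo i))
        = C (restrict (\<lambda>(k,j). Fb Fbar k (if (k,j) \<in> S then hi (k,j) else lo (k,j))) (idx L n))"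
      by (rule G)
    also have "\<dots> = C (restrict (\<lambda>(k,j). if j < n k - js k + bk k then Fbar k \<tau> else 1) (idx L n))"
    proof (rule EXcode[where c="\<lambda>k j. if j \<in> {j. (k,j) \<in> S} \<or> js k \<le> j then 1 else 0"
            and c'="\<lambda>k j. if j < n k - js k + card {j. (k,j) \<in> S} then 1 else 0"
            and val="\<lambda>k x. if x = 1 then Fbar k \<tau> else 1"])
      show "\<forall>k<L. \<forall>j<n k. Fb Fbar k (if (k,j) \<in> S then hi (k,j) else lo (k,j)) =
          (if (if j \<in> {j. (k,j) \<in> S} \<or> js k \<le> j then 1 else 0) = (1::nat) then Fbar k \<tau> else 1)"
        using Sk by (auto simp: Fb_def hi_def lo_def)
      show "\<forall>k<L. \<forall>j<n k. (case (k,j) of (k,j) \<Rightarrow> if j < n k - js k + bk k then Fbar k \<tau> else 1) =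
          (if (if j < n k - js k + card {j. (k,j) \<in> S} then 1 else 0) = (1::nat) then Fbar k \<tau> else 1)"
        by (auto simp: bk_def)
      show "\<forall>k<L. \<forall>x::nat. card {j. j < n k \<and> (if j \<in> {j. (k,j) \<in> S} \<or> js k \<le> j then 1 else 0) = x} =
                    card {j. j < n k \<and> (if j < n k - js k + card {j. (k,j) \<in> S} then 1 else 0) = x}"
      proof (intro allI impI)
        fix k x assume k: "k < L"
        show "card {j. j < n k \<and> (if j \<in> {j. (k,j) \<in> S} \<or> js k \<le> j then 1 else 0) = (x::nat)} =
              card {j. j < n k \<and> (if j < n k - js k + card {j. (k,j) \<in> S} then 1 else 0) = x}"
          by (rule card_a[OF Sk]) (use js k in simp)
      qed
    qed
    finally show "(-1::real) ^ card S * measure M (Ev (\<lambda>i. if i \<in> S then hi i else lo i))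
        = (-1::real) ^ card S * g (\<lambda>k\<in>{..<L}. card {j. (k,j) \<in> S})"
      unfolding g_def bk_def by simp
  qed
  also have "\<dots> = (\<Sum>bs\<in>PiE {..<L} (\<lambda>k. {0..js k}). (-1::real) ^ (\<Sum>k\<in>{..<L}. bs k) *
        (\<Prod>k\<in>{..<L}. real (js k choose bs k)) * g bs)"
    unfolding H_def by (rule RG) auto
  finally show ?thesis unfolding ev g_def by simp
qed

end

lemma card_b:
  fixes D J :: "nat set" and a b nn :: nat and pe P :: bool
  assumes ab: "a \<le> b" "b + (if pe then 1 else 0) \<le> nn" and D: "D \<subseteq> {a..<b}" and J: "J \<subseteq> {b + (if pe then 1 else 0)..<nn}"
  shows "card {j. j < nn \<and> (if j < a then 1 else if j < b then (if j \<in> D then 1 else 2) else if pe \<and> j = b then (if P then 3 else 2) else if j \<in> J then 2 else 0) = (x::nat)}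
       = card {j. j < nn \<and> (if j < a + card D then 1 else if j < b + card J + (if pe \<and> \<not> P then 1 else 0) then 2 else if pe \<and> P \<and> j = b + card J then 3 else 0) = x}"
proof -
  define e where "e = (if pe then 1 else 0::nat)"
  have fD: "finite D" using D finite_subset by blast
  have fJ: "finite J" using J finite_subset by blast
  have cD: "card D \<le> b - a" using card_mono[OF _ D] by simp
  have cJ: "card J \<le> nn - (b + e)" using card_mono[OF _ J] by (simp add: e_def)
  have e1: "b + e \<le> nn" using ab by (simp add: e_def)
  consider "x = 1" | "x = 2" | "x = 3" | "x = 0" | "x \<noteq> 0 \<and> x \<noteq> 1 \<and> x \<noteq> 2 \<and> x \<noteq> 3" by blast
  then show ?thesis
  proof cases
    case 1
    have L: "{j. j < nn \<and> (if j < a then 1 else if j < b then (if j \<in> D then 1 else 2) else if pe \<and> j = b then (if P then 3 else 2) else if j \<in> J then 2 else 0) = x} = {..<a} \<union> D"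
      using 1 D J ab by (auto split: if_splits)
    have R: "{j. j < nn \<and> (if j < a + card D then 1 else if j < b + card J + (if pe \<and> \<not> P then 1 else 0) then 2 else if pe \<and> P \<and> j = b + card J then 3 else 0) = x} = {..<a + card D}"
      using 1 cD ab e1 by (auto split: if_splits)
    have "card ({..<a} \<union> D) = a + card D" by (subst card_Un_disjoint) (use D fD in auto)
    then show ?thesis unfolding L R by simp
  next
    case 2
    have L: "{j. j < nn \<and> (if j < a then 1 else if j < b then (if j \<in> D then 1 else 2) else if pe \<and> j = b then (if P then 3 else 2) else if j \<in> J then 2 else 0) = x}
       = (({a..<b} - D) \<union> J) \<union> (if pe \<and> \<not> P then {b} else {})"
      using 2 D J ab by (auto split: if_splits)
    have R: "{j. j < nn \<and> (if j < a + card D then 1 else if j < b + card J + (if pe \<and> \<not> P then 1 else 0) then 2 else if pe \<and> P \<and> j = b + card J then 3 else 0) = x}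
       = {a + card D..<b + card J + (if pe \<and> \<not> P then 1 else 0)}"
      using 2 cD cJ ab e1 by (auto simp: e_def split: if_splits)
    have c1: "card (({a..<b} - D) \<union> J) = (b - a - card D) + card J"
      by (subst card_Un_disjoint) (use D J fD fJ in \<open>auto simp: card_Diff_subset\<close>)
    have "card ((({a..<b} - D) \<union> J) \<union> (if pe \<and> \<not> P then {b} else {})) = (b - a - card D) + card J + (if pe \<and> \<not> P then 1 else 0)"
      by (subst card_Un_disjoint) (use D J fD fJ c1 in auto)
    then show ?thesis unfolding L R using cD ab by simp
  next
    case 3
    have L: "{j. j < nn \<and> (if j < a then 1 else if j < b then (if j \<in> D then 1 else 2) else if pe \<and> j = b then (if P then 3 else 2) else if j \<in> J then 2 else 0) = x}
       = (if pe \<and> P then {b} else {})"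
      using 3 D J ab by (auto split: if_splits)
    have R: "{j. j < nn \<and> (if j < a + card D then 1 else if j < b + card J + (if pe \<and> \<not> P then 1 else 0) then 2 else if pe \<and> P \<and> j = b + card J then 3 else 0) = x}
       = (if pe \<and> P then {b + card J} else {})"
      using 3 cD cJ ab e1 by (auto simp: e_def split: if_splits)
    show ?thesis unfolding L R by simp
  next
    case 4
    have L: "{j. j < nn \<and> (if j < a then 1 else if j < b then (if j \<in> D then 1 else 2) else if pe \<and> j = b then (if P then 3 else 2) else if j \<in> J then 2 else 0) = x}
       = {b + e..<nn} - J"
      using 4 D J ab by (auto simp: e_def split: if_splits)
    have R: "{j. j < nn \<and> (if j < a + card D then 1 else if j < b + card J + (if pe \<and> \<not> P then 1 else 0) then 2 else if pe \<and> P \<and> j = b + card J then 3 else 0) = x}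
       = {b + card J + e..<nn}"
      using 4 cD cJ ab e1 by (auto simp: e_def split: if_splits)
    have J': "J \<subseteq> {b + e..<nn}" using J by (simp add: e_def)
    have "card ({b + e..<nn} - J) = nn - (b + e) - card J" by (simp add: card_Diff_subset[OF fJ J'])
    then show ?thesis unfolding L R by simp
  next
    case 5
    have L: "{j. j < nn \<and> (if j < a then 1 else if j < b then (if j \<in> D then 1 else 2) else if pe \<and> j = b then (if P then 3 else 2) else if j \<in> J then 2 else 0) = x} = {}"
      using 5 by (auto split: if_splits)
    have R: "{j. j < nn \<and> (if j < a + card D then 1 else if j < b + card J + (if pe \<and> \<not> P then 1 else 0) then 2 else if pe \<and> P \<and> j = b + card J then 3 else 0) = x} = {}"
      using 5 by (auto split: if_splits)
    show ?thesis unfolding L R ..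
  qed
qed

context setting
begin

lemma partB:
  assumes i: "i < L" and lm: "\<forall>k<L. ls k \<le> ms k \<and> ms k \<le> n k" and mi: "ms i < n i"
      and s: "0 < s" "s < s + \<delta>" "s < \<tau>"
  shows "measure M {\<omega>\<in>space M. \<forall>k<L.
          (\<forall>j<ls k. T k j \<omega> > \<tau>) \<and>
          (\<forall>j. ls k \<le> j \<and> j < ms k \<longrightarrow> s < T k j \<omega> \<and> T k j \<omega> \<le> \<tau>) \<and>
          (k \<noteq> i \<longrightarrow> (\<forall>j. ms k \<le> j \<and> j < n k \<longrightarrow> T k j \<omega> \<le> s)) \<and>
          (k = i \<longrightarrow> s < T k (ms k) \<omega> \<and> T k (ms k) \<omega> \<le> s + \<delta> \<and>
                     (\<forall>j. ms k < j \<and> j < n k \<longrightarrow> T k j \<omega> \<le> s))}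
      = (\<Sum>js\<in>PiE {..<L} (\<lambda>k. {0..(if k = i then n k - ms k - 1 else n k - ms k)}).
          (-1::real) ^ (\<Sum>k<L. js k) *
          (\<Prod>k<L. real ((if k = i then n k - ms k - 1 else n k - ms k) choose js k)) *
          (\<Sum>ds\<in>PiE {..<L} (\<lambda>k. {0..ms k - ls k}).
            (-1::real) ^ (\<Sum>k<L. ds k) * (\<Prod>k<L. real ((ms k - ls k) choose ds k)) *
            (C (restrict (\<lambda>(k,j).
                  if j < ls k + ds k then Fbar k \<tau>
                  else if j < ms k + js k + (if k = i then 1 else 0) then Fbar k s
                  else 1) (idx L n))
           - C (restrict (\<lambda>(k,j).
                  if j < ls k + ds k then Fbar k \<tau>
                  else if j < ms k + js k then Fbar k s
                  else if k = i \<and> j = ms k + js k then Fbar k (s + \<delta>)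
                  else 1) (idx L n)))))"
proof -
  define ei where "ei k = (if k = i then 1 else 0::nat)" for k
  define lo :: "nat \<times> nat \<Rightarrow> real option" where "lo = (\<lambda>(k,j). if j < ls k then Some \<tau> else if j < ms k then Some s
      else if k = i \<and> j = ms k then Some s else None)"
  define hi :: "nat \<times> nat \<Rightarrow> real option" where "hi = (\<lambda>(k,j). if j < ls k then None else if j < ms k then Some \<tau>
      else if k = i \<and> j = ms k then Some (s + \<delta>) else Some s)"
  define p where "p = (i, ms i)"
  define Mid where "Mid = Sigma {..<L} (\<lambda>k. {ls k..<ms k})"
  define Last where "Last = Sigma {..<L} (\<lambda>k. {ms k + ei k..<n k})"
  define H where "H = insert p (Last \<union> Mid)"
  define V where "V P js ds = C (restrict (\<lambda>(k,j). if j < ls k + ds k then Fbar k \<tau>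
      else if j < ms k + js k + (if k = i \<and> \<not> P then 1 else 0) then Fbar k s
      else if k = i \<and> P \<and> j = ms k + js k then Fbar k (s + \<delta>) else 1) (idx L n))" for P js ds
  define W where "W js ds = V False js ds - V True js ds" for js ds
  define rc where "rc S = (\<lambda>k\<in>{..<L}. card {j. (k,j) \<in> S})" for S :: "(nat \<times> nat) set"
  define th where "th S = (\<lambda>x. if x \<in> S then hi x else lo x)" for S
  have fMid: "finite Mid" unfolding Mid_def by auto
  have fLast: "finite Last" unfolding Last_def by auto
  have pn: "p \<notin> Last \<union> Mid" unfolding p_def Last_def Mid_def ei_def by auto
  have dLM: "Last \<inter> Mid = {}" unfolding Last_def Mid_def by auto
  have fH: "finite H" unfolding H_def using fMid fLast by auto
  have HH: "{x\<in>idx L n. hi x \<noteq> None} = H"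
  proof (intro equalityI subsetI)
    fix x assume x: "x \<in> {x\<in>idx L n. hi x \<noteq> None}"
    obtain k j where kj: "x = (k,j)" by (cases x)
    have k: "k < L" "j < n k" and h: "hi (k,j) \<noteq> None" using x kj by auto
    then have "ls k \<le> j" by (auto simp: hi_def split: if_splits)
    then show "x \<in> H" using k kj by (auto simp: H_def p_def Last_def Mid_def ei_def)
  next
    fix x assume x: "x \<in> H"
    then show "x \<in> {x\<in>idx L n. hi x \<noteq> None}" using lm mi i
      by (auto simp: H_def p_def Last_def Mid_def ei_def hi_def split: if_splits)
  qed
  have cp: "compat lo hi" unfolding compat_def lo_def hi_def using s by (auto split: if_splits)
  have ev: "{\<omega>\<in>space M. \<forall>k<L.
          (\<forall>j<ls k. T k j \<omega> > \<tau>) \<and>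
          (\<forall>j. ls k \<le> j \<and> j < ms k \<longrightarrow> s < T k j \<omega> \<and> T k j \<omega> \<le> \<tau>) \<and>
          (k \<noteq> i \<longrightarrow> (\<forall>j. ms k \<le> j \<and> j < n k \<longrightarrow> T k j \<omega> \<le> s)) \<and>
          (k = i \<longrightarrow> s < T k (ms k) \<omega> \<and> T k (ms k) \<omega> \<le> s + \<delta> \<and>
                     (\<forall>j. ms k < j \<and> j < n k \<longrightarrow> T k j \<omega> \<le> s))} = Ev2 lo hi"
    unfolding Ev2_def
  proof (intro Collect_cong conj_cong refl)
    fix \<omega>
    have "((\<forall>j<ls k. T k j \<omega> > \<tau>) \<and>
          (\<forall>j. ls k \<le> j \<and> j < ms k \<longrightarrow> s < T k j \<omega> \<and> T k j \<omega> \<le> \<tau>) \<and>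
          (k \<noteq> i \<longrightarrow> (\<forall>j. ms k \<le> j \<and> j < n k \<longrightarrow> T k j \<omega> \<le> s)) \<and>
          (k = i \<longrightarrow> s < T k (ms k) \<omega> \<and> T k (ms k) \<omega> \<le> s + \<delta> \<and>
                     (\<forall>j. ms k < j \<and> j < n k \<longrightarrow> T k j \<omega> \<le> s)))
       = (\<forall>j<n k. above (lo (k, j)) (T k j \<omega>) \<and> below (hi (k, j)) (T k j \<omega>))" if k: "k < L" for k
    proof
      assume A: "(\<forall>j<ls k. T k j \<omega> > \<tau>) \<and>
          (\<forall>j. ls k \<le> j \<and> j < ms k \<longrightarrow> s < T k j \<omega> \<and> T k j \<omega> \<le> \<tau>) \<and>
          (k \<noteq> i \<longrightarrow> (\<forall>j. ms k \<le> j \<and> j < n k \<longrightarrow> T k j \<omega> \<le> s)) \<and>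
          (k = i \<longrightarrow> s < T k (ms k) \<omega> \<and> T k (ms k) \<omega> \<le> s + \<delta> \<and>
                     (\<forall>j. ms k < j \<and> j < n k \<longrightarrow> T k j \<omega> \<le> s))"
      show "\<forall>j<n k. above (lo (k, j)) (T k j \<omega>) \<and> below (hi (k, j)) (T k j \<omega>)"
      proof (intro allI impI)
        fix j assume j: "j < n k"
        consider "j < ls k" | "ls k \<le> j \<and> j < ms k" | "k = i \<and> j = ms k" | "ms k \<le> j \<and> \<not> (k = i \<and> j = ms k)" by linarith
        then show "above (lo (k, j)) (T k j \<omega>) \<and> below (hi (k, j)) (T k j \<omega>)"
        proof cases
          case 1 then show ?thesis using A by (auto simp: lo_def hi_def above_def below_def)
        next
          case 2 then show ?thesis using A by (auto simp: lo_def hi_def above_def below_def)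
        next
          case 3 then show ?thesis using A lm k by (auto simp: lo_def hi_def above_def below_def)
        next
          case 4 then show ?thesis using A lm k j by (auto simp: lo_def hi_def above_def below_def)
        qed
      qed
    next
      assume B: "\<forall>j<n k. above (lo (k, j)) (T k j \<omega>) \<and> below (hi (k, j)) (T k j \<omega>)"
      have B1: "j < n k \<Longrightarrow> above (lo (k, j)) (T k j \<omega>)" and B2: "j < n k \<Longrightarrow> below (hi (k, j)) (T k j \<omega>)" for j
        using B by auto
      have lmk: "ls k \<le> ms k" "ms k \<le> n k" using lm k by auto
      show "(\<forall>j<ls k. T k j \<omega> > \<tau>) \<and>
          (\<forall>j. ls k \<le> j \<and> j < ms k \<longrightarrow> s < T k j \<omega> \<and> T k j \<omega> \<le> \<tau>) \<and>
          (k \<noteq> i \<longrightarrow> (\<forall>j. ms k \<le> j \<and> j < n k \<longrightarrow> T k j \<omega> \<le> s)) \<and>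
          (k = i \<longrightarrow> s < T k (ms k) \<omega> \<and> T k (ms k) \<omega> \<le> s + \<delta> \<and>
                     (\<forall>j. ms k < j \<and> j < n k \<longrightarrow> T k j \<omega> \<le> s))"
      proof (intro conjI allI impI)
        fix j assume j: "j < ls k"
        then show "T k j \<omega> > \<tau>" using B1[of j] lmk by (simp add: lo_def above_def)
      next
        fix j assume j: "ls k \<le> j \<and> j < ms k"
        then show "s < T k j \<omega>" using B1[of j] lmk by (simp add: lo_def above_def)
        show "T k j \<omega> \<le> \<tau>" using B2[of j] lmk j by (simp add: hi_def below_def)
      next
        fix j assume "k \<noteq> i" "ms k \<le> j \<and> j < n k"
        then show "T k j \<omega> \<le> s" using B2[of j] lmk by (simp add: hi_def below_def)
      next
        assume "k = i"
        then show "s < T k (ms k) \<omega>" using B1[of "ms k"] mi lmk by (simp add: lo_def above_def)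
      next
        assume "k = i"
        then show "T k (ms k) \<omega> \<le> s + \<delta>" using B2[of "ms k"] mi lmk by (simp add: hi_def below_def)
      next
        fix j assume "k = i" "ms k < j \<and> j < n k"
        then show "T k j \<omega> \<le> s" using B2[of j] lmk by (simp add: hi_def below_def)
      qed
    qed
    then show "(\<forall>k<L.
          (\<forall>j<ls k. T k j \<omega> > \<tau>) \<and>
          (\<forall>j. ls k \<le> j \<and> j < ms k \<longrightarrow> s < T k j \<omega> \<and> T k j \<omega> \<le> \<tau>) \<and>
          (k \<noteq> i \<longrightarrow> (\<forall>j. ms k \<le> j \<and> j < n k \<longrightarrow> T k j \<omega> \<le> s)) \<and>
          (k = i \<longrightarrow> s < T k (ms k) \<omega> \<and> T k (ms k) \<omega> \<le> s + \<delta> \<and>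
                     (\<forall>j. ms k < j \<and> j < n k \<longrightarrow> T k j \<omega> \<le> s))) =
      (\<forall>k<L. \<forall>j<n k. above (lo (k, j)) (T k j \<omega>) \<and> below (hi (k, j)) (T k j \<omega>))" by simp
  qed
  have KEY: "measure M (Ev (th (if P then insert p (S1 \<union> S2) else S1 \<union> S2))) = V P (rc S1) (rc S2)"
    if S1: "S1 \<subseteq> Last" and S2: "S2 \<subseteq> Mid" for S1 S2 P
  proof -
    define S where "S = (if P then insert p (S1 \<union> S2) else S1 \<union> S2)"
    have m1: "(k,j) \<in> S1 \<Longrightarrow> ms k + ei k \<le> j \<and> j < n k" for k j using S1 by (auto simp: Last_def)
    have m2: "(k,j) \<in> S2 \<Longrightarrow> ls k \<le> j \<and> j < ms k" for k j using S2 by (auto simp: Mid_def)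
    have "measure M (Ev (th S)) = C (restrict (\<lambda>(k,j). Fb Fbar k (th S (k,j))) (idx L n))" by (rule G)
    also have "\<dots> = V P (rc S1) (rc S2)" unfolding V_def
    proof (rule EXcode[where c = "\<lambda>k j. if j < ls k then 1 else if j < ms k then (if j \<in> {j. (k,j) \<in> S2} then 1 else 2)
           else if k = i \<and> j = ms k then (if P then 3 else 2) else if j \<in> {j. (k,j) \<in> S1} then 2 else 0"
        and c' = "\<lambda>k j. if j < ls k + card {j. (k,j) \<in> S2} then 1
           else if j < ms k + card {j. (k,j) \<in> S1} + (if k = i \<and> \<not> P then 1 else 0) then 2
           else if k = i \<and> P \<and> j = ms k + card {j. (k,j) \<in> S1} then 3 else 0"
        and val = "\<lambda>k x. if x = 1 then Fbar k \<tau> else if x = 2 then Fbar k s else if x = 3 then Fbar k (s + \<delta>) else 1"])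
      show "\<forall>k<L. \<forall>j<n k. Fb Fbar k (th S (k, j)) =
        (if (if j < ls k then 1 else if j < ms k then (if j \<in> {j. (k,j) \<in> S2} then 1 else 2)
           else if k = i \<and> j = ms k then (if P then 3 else 2) else if j \<in> {j. (k,j) \<in> S1} then 2 else 0) = (1::nat) then Fbar k \<tau>
         else if (if j < ls k then 1 else if j < ms k then (if j \<in> {j. (k,j) \<in> S2} then 1 else 2)
           else if k = i \<and> j = ms k then (if P then 3 else 2) else if j \<in> {j. (k,j) \<in> S1} then 2 else 0) = (2::nat) then Fbar k s
         else if (if j < ls k then 1 else if j < ms k then (if j \<in> {j. (k,j) \<in> S2} then 1 else 2)
           else if k = i \<and> j = ms k then (if P then 3 else 2) else if j \<in> {j. (k,j) \<in> S1} then 2 else 0) = (3::nat) then Fbar k (s + \<delta>)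
         else 1)"
      proof (intro allI impI)
        fix k j assume k: "k < L" and j: "j < n k"
        have lmk: "ls k \<le> ms k" "ms k \<le> n k" using lm k by auto
        consider "j < ls k" | "ls k \<le> j \<and> j < ms k" | "k = i \<and> j = ms k" | "ms k \<le> j \<and> \<not> (k = i \<and> j = ms k)" by linarith
        then show "Fb Fbar k (th S (k, j)) =
        (if (if j < ls k then 1 else if j < ms k then (if j \<in> {j. (k,j) \<in> S2} then 1 else 2)
           else if k = i \<and> j = ms k then (if P then 3 else 2) else if j \<in> {j. (k,j) \<in> S1} then 2 else 0) = (1::nat) then Fbar k \<tau>
         else if (if j < ls k then 1 else if j < ms k then (if j \<in> {j. (k,j) \<in> S2} then 1 else 2)
           else if k = i \<and> j = ms k then (if P then 3 else 2) else if j \<in> {j. (k,j) \<in> S1} then 2 else 0) = (2::nat) then Fbar k s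
         else if (if j < ls k then 1 else if j < ms k then (if j \<in> {j. (k,j) \<in> S2} then 1 else 2)
           else if k = i \<and> j = ms k then (if P then 3 else 2) else if j \<in> {j. (k,j) \<in> S1} then 2 else 0) = (3::nat) then Fbar k (s + \<delta>)
         else 1)"
        proof cases
          case 1
          have "(k,j) \<notin> S" using 1 m1[of k j] m2[of k j] lmk by (auto simp: S_def p_def ei_def)
          then show ?thesis using 1 by (simp add: th_def lo_def Fb_def)
        next
          case 2
          have "(k,j) \<notin> S1" "(k,j) \<noteq> p" using 2 m1[of k j] by (auto simp: p_def ei_def)
          then have "(k,j) \<in> S \<longleftrightarrow> (k,j) \<in> S2" by (auto simp: S_def)
          then show ?thesis using 2 by (auto simp: th_def lo_def hi_def Fb_def)
        next
          case 3
          have "(k,j) \<notin> S1" "(k,j) \<notin> S2" "(k,j) = p" using 3 m1[of k j] m2[of k j] by (auto simp: p_def ei_def)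
          then have "(k,j) \<in> S \<longleftrightarrow> P" by (auto simp: S_def)
          then show ?thesis using 3 lmk by (auto simp: th_def lo_def hi_def Fb_def)
        next
          case 4
          have "(k,j) \<notin> S2" "(k,j) \<noteq> p" using 4 m2[of k j] by (auto simp: p_def)
          then have "(k,j) \<in> S \<longleftrightarrow> (k,j) \<in> S1" by (auto simp: S_def)
          then show ?thesis using 4 lmk by (auto simp: th_def lo_def hi_def Fb_def)
        qed
      qed
      show "\<forall>k<L. \<forall>j<n k. (case (k, j) of (k, j) \<Rightarrow> if j < ls k + rc S2 k then Fbar k \<tau>
           else if j < ms k + rc S1 k + (if k = i \<and> \<not> P then 1 else 0) then Fbar k s
           else if k = i \<and> P \<and> j = ms k + rc S1 k then Fbar k (s + \<delta>) else 1) =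
        (if (if j < ls k + card {j. (k,j) \<in> S2} then 1
           else if j < ms k + card {j. (k,j) \<in> S1} + (if k = i \<and> \<not> P then 1 else 0) then 2
           else if k = i \<and> P \<and> j = ms k + card {j. (k,j) \<in> S1} then 3 else 0) = (1::nat) then Fbar k \<tau>
         else if (if j < ls k + card {j. (k,j) \<in> S2} then 1
           else if j < ms k + card {j. (k,j) \<in> S1} + (if k = i \<and> \<not> P then 1 else 0) then 2
           else if k = i \<and> P \<and> j = ms k + card {j. (k,j) \<in> S1} then 3 else 0) = (2::nat) then Fbar k s
         else if (if j < ls k + card {j. (k,j) \<in> S2} then 1
           else if j < ms k + card {j. (k,j) \<in> S1} + (if k = i \<and> \<not> P then 1 else 0) then 2
           else if k = i \<and> P \<and> j = ms k + card {j. (k,j) \<in> S1} then 3 else 0) = (3::nat) then Fbar k (s + \<delta>)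
         else 1)"
        by (auto simp: rc_def)
      show "\<forall>k<L. \<forall>x::nat. card {j. j < n k \<and> (if j < ls k then 1 else if j < ms k then (if j \<in> {j. (k,j) \<in> S2} then 1 else 2)
           else if k = i \<and> j = ms k then (if P then 3 else 2) else if j \<in> {j. (k,j) \<in> S1} then 2 else 0) = x}
        = card {j. j < n k \<and> (if j < ls k + card {j. (k,j) \<in> S2} then 1
           else if j < ms k + card {j. (k,j) \<in> S1} + (if k = i \<and> \<not> P then 1 else 0) then 2
           else if k = i \<and> P \<and> j = ms k + card {j. (k,j) \<in> S1} then 3 else 0) = x}"
      proof (intro allI impI)
        fix k x assume k: "k < L"
        show "card {j. j < n k \<and> (if j < ls k then 1 else if j < ms k then (if j \<in> {j. (k,j) \<in> S2} then 1 else 2)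
           else if k = i \<and> j = ms k then (if P then 3 else 2) else if j \<in> {j. (k,j) \<in> S1} then 2 else 0) = (x::nat)}
        = card {j. j < n k \<and> (if j < ls k + card {j. (k,j) \<in> S2} then 1
           else if j < ms k + card {j. (k,j) \<in> S1} + (if k = i \<and> \<not> P then 1 else 0) then 2
           else if k = i \<and> P \<and> j = ms k + card {j. (k,j) \<in> S1} then 3 else 0) = x}"
        proof (rule card_b)
          show "ls k \<le> ms k" using lm k by auto
          show "ms k + (if k = i then 1 else 0) \<le> n k" using lm k mi by auto
          show "{j. (k,j) \<in> S2} \<subseteq> {ls k..<ms k}" using m2 by auto
          show "{j. (k,j) \<in> S1} \<subseteq> {ms k + (if k = i then 1 else 0)..<n k}"
          proof
            fix j assume "j \<in> {j. (k,j) \<in> S1}"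
            then have "ms k + ei k \<le> j \<and> j < n k" using m1 by blast
            then show "j \<in> {ms k + (if k = i then 1 else 0)..<n k}" by (simp add: ei_def)
          qed
        qed
      qed
    qed
    finally show ?thesis unfolding S_def .
  qed
  define F where "F S = (-1::real) ^ card S * measure M (Ev (th S))" for S
  have rcE: "rc S = (\<lambda>k\<in>{..<L}. card {j. (k,j) \<in> S})" for S by (simp add: rc_def)
  define Q where "Q js = (\<Sum>ds\<in>PiE {..<L} (\<lambda>k. {0..ms k - ls k}). (-1::real) ^ (\<Sum>k\<in>{..<L}. ds k) *
      (\<Prod>k\<in>{..<L}. real ((ms k - ls k) choose ds k)) * W js ds)" for js
  have "measure M (Ev2 lo hi) = (\<Sum>S\<in>Pow H. F S)"
    using IE_aux[OF fH] cp HH unfolding F_def th_def by blast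
  also have "\<dots> = (\<Sum>S\<in>Pow (Last \<union> Mid). F S) + (\<Sum>S\<in>Pow (Last \<union> Mid). F (insert p S))"
    unfolding H_def by (rule sum_Pow_insert) (use fMid fLast pn in auto)
  also have "\<dots> = (\<Sum>S\<in>Pow (Last \<union> Mid). F S + F (insert p S))"
    by (simp add: sum.distrib)
  also have "\<dots> = (\<Sum>S1\<in>Pow Last. \<Sum>S2\<in>Pow Mid. F (S1 \<union> S2) + F (insert p (S1 \<union> S2)))"
    by (rule sum_Pow_Un[OF fLast fMid dLM])
  also have "\<dots> = (\<Sum>S1\<in>Pow Last. (-1::real) ^ card S1 * (\<Sum>S2\<in>Pow Mid. (-1::real) ^ card S2 * W (rc S1) (rc S2)))"
  proof (rule sum.cong[OF refl])
    fix S1 assume S1: "S1 \<in> Pow Last"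
    show "(\<Sum>S2\<in>Pow Mid. F (S1 \<union> S2) + F (insert p (S1 \<union> S2)))
        = (-1::real) ^ card S1 * (\<Sum>S2\<in>Pow Mid. (-1::real) ^ card S2 * W (rc S1) (rc S2))"
      unfolding sum_distrib_left
    proof (rule sum.cong[OF refl])
      fix S2 assume S2: "S2 \<in> Pow Mid"
      have f1: "finite S1" using S1 fLast finite_subset by blast
      have f2: "finite S2" using S2 fMid finite_subset by blast
      have c1: "card (S1 \<union> S2) = card S1 + card S2"
        by (rule card_Un_disjoint) (use f1 f2 S1 S2 dLM in auto)
      have pS: "p \<notin> S1 \<union> S2" using pn S1 S2 by auto
      have c2: "card (insert p (S1 \<union> S2)) = Suc (card S1 + card S2)"
        using card_insert_disjoint[of "S1 \<union> S2" p] f1 f2 pS c1 by simp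
      have K1: "measure M (Ev (th (S1 \<union> S2))) = V False (rc S1) (rc S2)"
        using KEY[of S1 S2 False] S1 S2 by simp
      have K2: "measure M (Ev (th (insert p (S1 \<union> S2)))) = V True (rc S1) (rc S2)"
        using KEY[of S1 S2 True] S1 S2 by simp
      show "F (S1 \<union> S2) + F (insert p (S1 \<union> S2)) = (-1::real) ^ card S1 * ((-1::real) ^ card S2 * W (rc S1) (rc S2))"
        unfolding F_def K1 K2 c1 c2 W_def by (simp add: power_add algebra_simps)
    qed
  qed
  also have "\<dots> = (\<Sum>S1\<in>Pow Last. (-1::real) ^ card S1 * Q (rc S1))"
  proof (rule sum.cong[OF refl])
    fix S1 assume S1: "S1 \<in> Pow Last"
    have "(\<Sum>S2\<in>Pow Mid. (-1::real) ^ card S2 * W (rc S1) (rc S2)) = Q (rc S1)"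
      unfolding Q_def rcE Mid_def by (rule RG) auto
    then show "(-1::real) ^ card S1 * (\<Sum>S2\<in>Pow Mid. (-1::real) ^ card S2 * W (rc S1) (rc S2))
        = (-1::real) ^ card S1 * Q (rc S1)" by simp
  qed
  also have "\<dots> = (\<Sum>js\<in>PiE {..<L} (\<lambda>k. {0..(if k = i then n k - ms k - 1 else n k - ms k)}).
          (-1::real) ^ (\<Sum>k\<in>{..<L}. js k) *
          (\<Prod>k\<in>{..<L}. real ((if k = i then n k - ms k - 1 else n k - ms k) choose js k)) * Q js)"
    unfolding rcE Last_def by (rule RG) (auto simp: ei_def)
  finally have main: "measure M (Ev2 lo hi) = \<dots>" .
  have VF: "V False js ds = C (restrict (\<lambda>(k,j).
                  if j < ls k + ds k then Fbar k \<tau>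
                  else if j < ms k + js k + (if k = i then 1 else 0) then Fbar k s
                  else 1) (idx L n))" for js ds
    unfolding V_def by (intro arg_cong[where f=C] restrict_ext) auto
  have VT: "V True js ds = C (restrict (\<lambda>(k,j).
                  if j < ls k + ds k then Fbar k \<tau>
                  else if j < ms k + js k then Fbar k s
                  else if k = i \<and> j = ms k + js k then Fbar k (s + \<delta>)
                  else 1) (idx L n))" for js ds
    unfolding V_def by (intro arg_cong[where f=C] restrict_ext) auto
  show ?thesis unfolding ev main Q_def W_def VF VT by simp
qed

end

theorem theorem2:
  fixes M :: "'a measure"
    and T :: "nat \<Rightarrow> nat \<Rightarrow> 'a \<Rightarrow> real"
    and Fbar :: "nat \<Rightarrow> real \<Rightarrow> real"
    and C :: "(nat \<times> nat \<Rightarrow> real) \<Rightarrow> real"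
    and L :: nat and n :: "nat \<Rightarrow> nat"
  assumes prob: "prob_space M"
    and L: "L \<ge> 1"
    and meas: "\<forall>k<L. \<forall>j<n k. T k j \<in> borel_measurable M"
    and rel: "\<forall>k<L. \<forall>j<n k. \<forall>t. Fbar k t = measure M {\<omega>\<in>space M. T k j \<omega> > t}"
    and exch: "\<forall>\<sigma>. (\<forall>k<L. \<sigma> k permutes {..<n k}) \<longrightarrow>
        distr M (PiM (idx L n) (\<lambda>_. borel)) (\<lambda>\<omega>. restrict (\<lambda>(k,j). T k (\<sigma> k j) \<omega>) (idx L n))
      = distr M (PiM (idx L n) (\<lambda>_. borel)) (\<lambda>\<omega>. restrict (\<lambda>(k,j). T k j \<omega>) (idx L n))"
    and cop: "is_copula (idx L n) C"
    and joint: "\<forall>t :: nat \<Rightarrow> nat \<Rightarrow> real.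
        measure M {\<omega>\<in>space M. \<forall>k<L. \<forall>j<n k. T k j \<omega> > t k j}
      = C (restrict (\<lambda>(k,j). Fbar k (t k j)) (idx L n))"
  shows
   "(\<forall>\<tau>>0. \<forall>js. (\<forall>k<L. js k \<le> n k) \<longrightarrow>
      measure M {\<omega>\<in>space M. \<forall>k<L. (\<forall>j<js k. T k j \<omega> \<le> \<tau>) \<and>
                                    (\<forall>j. js k \<le> j \<and> j < n k \<longrightarrow> T k j \<omega> > \<tau>)}
      = (\<Sum>bs\<in>PiE {..<L} (\<lambda>k. {0..js k}).
           (-1::real) ^ (\<Sum>k<L. bs k) * (\<Prod>k<L. real (js k choose bs k)) *
           C (restrict (\<lambda>(k,j). if j < n k - js k + bs k then Fbar k \<tau> else 1) (idx L n))))
    \<and>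
    (\<forall>i<L. \<forall>ls ms. \<forall>s \<delta> \<tau>.
      (\<forall>k<L. ls k \<le> ms k \<and> ms k \<le> n k) \<and> ms i < n i \<and>
      0 < s \<and> s < s + \<delta> \<and> s < \<tau> \<longrightarrow>
      measure M {\<omega>\<in>space M. \<forall>k<L.
          (\<forall>j<ls k. T k j \<omega> > \<tau>) \<and>
          (\<forall>j. ls k \<le> j \<and> j < ms k \<longrightarrow> s < T k j \<omega> \<and> T k j \<omega> \<le> \<tau>) \<and>
          (k \<noteq> i \<longrightarrow> (\<forall>j. ms k \<le> j \<and> j < n k \<longrightarrow> T k j \<omega> \<le> s)) \<and>
          (k = i \<longrightarrow> s < T k (ms k) \<omega> \<and> T k (ms k) \<omega> \<le> s + \<delta> \<and>
                     (\<forall>j. ms k < j \<and> j < n k \<longrightarrow> T k j \<omega> \<le> s))}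
      = (\<Sum>js\<in>PiE {..<L} (\<lambda>k. {0..(if k = i then n k - ms k - 1 else n k - ms k)}).
          (-1::real) ^ (\<Sum>k<L. js k) *
          (\<Prod>k<L. real ((if k = i then n k - ms k - 1 else n k - ms k) choose js k)) *
          (\<Sum>ds\<in>PiE {..<L} (\<lambda>k. {0..ms k - ls k}).
            (-1::real) ^ (\<Sum>k<L. ds k) * (\<Prod>k<L. real ((ms k - ls k) choose ds k)) *
            (C (restrict (\<lambda>(k,j).
                  if j < ls k + ds k then Fbar k \<tau>
                  else if j < ms k + js k + (if k = i then 1 else 0) then Fbar k s
                  else 1) (idx L n))
           - C (restrict (\<lambda>(k,j).
                  if j < ls k + ds k then Fbar k \<tau>
                  else if j < ms k + js k then Fbar k s
                  else if k = i \<and> j = ms k + js k then Fbar k (s + \<delta>)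
                  else 1) (idx L n))))))"
proof -
  have S: "setting M T Fbar C L n" by (rule setting.intro[OF prob meas rel exch cop joint])
  show ?thesis
  proof (intro conjI allI impI)
    fix \<tau> :: real and js :: "nat \<Rightarrow> nat"
    assume "\<tau> > 0" and js: "\<forall>k<L. js k \<le> n k"
    show "measure M {\<omega>\<in>space M. \<forall>k<L. (\<forall>j<js k. T k j \<omega> \<le> \<tau>) \<and>
                                    (\<forall>j. js k \<le> j \<and> j < n k \<longrightarrow> T k j \<omega> > \<tau>)}
      = (\<Sum>bs\<in>PiE {..<L} (\<lambda>k. {0..js k}).
           (-1::real) ^ (\<Sum>k<L. bs k) * (\<Prod>k<L. real (js k choose bs k)) *
           C (restrict (\<lambda>(k,j). if j < n k - js k + bs k then Fbar k \<tau> else 1) (idx L n)))"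
      by (rule setting.partA[OF S js])
  next
    fix i :: nat and ls ms :: "nat \<Rightarrow> nat" and s \<delta> \<tau> :: real
    assume i: "i < L" and h: "(\<forall>k<L. ls k \<le> ms k \<and> ms k \<le> n k) \<and> ms i < n i \<and>
      0 < s \<and> s < s + \<delta> \<and> s < \<tau>"
    then show "measure M {\<omega>\<in>space M. \<forall>k<L.
          (\<forall>j<ls k. T k j \<omega> > \<tau>) \<and>
          (\<forall>j. ls k \<le> j \<and> j < ms k \<longrightarrow> s < T k j \<omega> \<and> T k j \<omega> \<le> \<tau>) \<and>
          (k \<noteq> i \<longrightarrow> (\<forall>j. ms k \<le> j \<and> j < n k \<longrightarrow> T k j \<omega> \<le> s)) \<and>
          (k = i \<longrightarrow> s < T k (ms k) \<omega> \<and> T k (ms k) \<omega> \<le> s + \<delta> \<and>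
                     (\<forall>j. ms k < j \<and> j < n k \<longrightarrow> T k j \<omega> \<le> s))}
      = (\<Sum>js\<in>PiE {..<L} (\<lambda>k. {0..(if k = i then n k - ms k - 1 else n k - ms k)}).
          (-1::real) ^ (\<Sum>k<L. js k) *
          (\<Prod>k<L. real ((if k = i then n k - ms k - 1 else n k - ms k) choose js k)) *
          (\<Sum>ds\<in>PiE {..<L} (\<lambda>k. {0..ms k - ls k}).
            (-1::real) ^ (\<Sum>k<L. ds k) * (\<Prod>k<L. real ((ms k - ls k) choose ds k)) *
            (C (restrict (\<lambda>(k,j).
                  if j < ls k + ds k then Fbar k \<tau>
                  else if j < ms k + js k + (if k = i then 1 else 0) then Fbar k s
                  else 1) (idx L n))
           - C (restrict (\<lambda>(k,j).
                  if j < ls k + ds k then Fbar k \<tau>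
                  else if j < ms k + js k then Fbar k s
                  else if k = i \<and> j = ms k + js k then Fbar k (s + \<delta>)
                  else 1) (idx L n)))))"
      using setting.partB[OF S i] by blast
  qed
qed

end
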